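(* ($\mathrm{ZFCU}_R$) Let $\mathcal{I}$ be an $\mathcal{A}$-ideal and let $U^{\mathcal{I}}=\{x: ker(x)\in\mathcal{I}\}$. Then $U^{\mathcal{I}}\models\mathrm{ZFCU}_R+$ "$\mathcal{A}$ is a proper class".
   Context: $\mathrm{ZFCU}_R$ is ZFC with urelements (language $\{\in,\mathcal{A}\}$, $\mathcal{A}$ the urelement predicate), formulated with Replacement rather than Collection, with AC. $ker(x)$ is the set of urelements in the transitive closure of $\{x\}$ (so $ker(a)=\{a\}$ for a urelement $a$). An $\mathcal{A}$-ideal is a (definable) class $\mathcal{I}$ of sets of urelements such that: if the class $\mathcal{A}$ of all urelements is a set then $\mathcal{A}\notin\mathcal{I}$; $\mathcal{I}$ is closed under finite unions and subsets; and $\{a\}\in\mathcal{I}$ for every urelement $a$. "$\mathcal{A}$ is a proper class" means no set contains exactly the urelements. *)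

theory Defs
  imports Main
begin

datatype fm =
    Mem nat nat
  | Equ nat nat
  | Urel nat
  | Neg fm
  | Conj fm fm
  | Ex nat fm

fun sat :: "'a set \<Rightarrow> ('a \<Rightarrow> 'a \<Rightarrow> bool) \<Rightarrow> ('a \<Rightarrow> bool) \<Rightarrow> (nat \<Rightarrow> 'a) \<Rightarrow> fm \<Rightarrow> bool" where
  "sat D E Ur env (Mem i j) = E (env i) (env j)"
| "sat D E Ur env (Equ i j) = (env i = env j)"
| "sat D E Ur env (Urel i) = Ur (env i)"
| "sat D E Ur env (Neg p) = (\<not> sat D E Ur env p)"
| "sat D E Ur env (Conj p q) = (sat D E Ur env p \<and> sat D E Ur env q)"
| "sat D E Ur env (Ex i p) = (\<exists>d\<in>D. sat D E Ur (env(i := d)) p)"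

definition ax_urelements :: "'a set \<Rightarrow> ('a \<Rightarrow> 'a \<Rightarrow> bool) \<Rightarrow> ('a \<Rightarrow> bool) \<Rightarrow> bool" where
  "ax_urelements D E Ur \<longleftrightarrow> (\<forall>a\<in>D. Ur a \<longrightarrow> (\<forall>z\<in>D. \<not> E z a))"

definition ax_extensionality :: "'a set \<Rightarrow> ('a \<Rightarrow> 'a \<Rightarrow> bool) \<Rightarrow> ('a \<Rightarrow> bool) \<Rightarrow> bool" where
  "ax_extensionality D E Ur \<longleftrightarrow>
     (\<forall>x\<in>D. \<forall>y\<in>D. \<not> Ur x \<longrightarrow> \<not> Ur y \<longrightarrow> (\<forall>z\<in>D. E z x \<longleftrightarrow> E z y) \<longrightarrow> x = y)"

definition ax_foundation :: "'a set \<Rightarrow> ('a \<Rightarrow> 'a \<Rightarrow> bool) \<Rightarrow> ('a \<Rightarrow> bool) \<Rightarrow> bool" where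
  "ax_foundation D E Ur \<longleftrightarrow>
     (\<forall>x\<in>D. (\<exists>y\<in>D. E y x) \<longrightarrow> (\<exists>y\<in>D. E y x \<and> \<not> (\<exists>z\<in>D. E z y \<and> E z x)))"

definition ax_pairing :: "'a set \<Rightarrow> ('a \<Rightarrow> 'a \<Rightarrow> bool) \<Rightarrow> ('a \<Rightarrow> bool) \<Rightarrow> bool" where
  "ax_pairing D E Ur \<longleftrightarrow>
     (\<forall>x\<in>D. \<forall>y\<in>D. \<exists>p\<in>D. \<not> Ur p \<and> (\<forall>z\<in>D. E z p \<longleftrightarrow> (z = x \<or> z = y)))"

definition ax_union :: "'a set \<Rightarrow> ('a \<Rightarrow> 'a \<Rightarrow> bool) \<Rightarrow> ('a \<Rightarrow> bool) \<Rightarrow> bool" where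
  "ax_union D E Ur \<longleftrightarrow>
     (\<forall>x\<in>D. \<not> Ur x \<longrightarrow> (\<exists>u\<in>D. \<not> Ur u \<and> (\<forall>z\<in>D. E z u \<longleftrightarrow> (\<exists>y\<in>D. E y x \<and> E z y))))"

definition ax_powerset :: "'a set \<Rightarrow> ('a \<Rightarrow> 'a \<Rightarrow> bool) \<Rightarrow> ('a \<Rightarrow> bool) \<Rightarrow> bool" where
  "ax_powerset D E Ur \<longleftrightarrow>
     (\<forall>x\<in>D. \<not> Ur x \<longrightarrow> (\<exists>p\<in>D. \<not> Ur p \<and>
        (\<forall>y\<in>D. E y p \<longleftrightarrow> (\<not> Ur y \<and> (\<forall>z\<in>D. E z y \<longrightarrow> E z x)))))"

definition ax_infinity :: "'a set \<Rightarrow> ('a \<Rightarrow> 'a \<Rightarrow> bool) \<Rightarrow> ('a \<Rightarrow> bool) \<Rightarrow> bool" where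
  "ax_infinity D E Ur \<longleftrightarrow>
     (\<exists>w\<in>D. \<not> Ur w
        \<and> (\<exists>e\<in>D. \<not> Ur e \<and> (\<forall>z\<in>D. \<not> E z e) \<and> E e w)
        \<and> (\<forall>y\<in>D. E y w \<longrightarrow>
              (\<exists>s\<in>D. \<not> Ur s \<and> E s w \<and> (\<forall>z\<in>D. E z s \<longleftrightarrow> (E z y \<or> z = y)))))"

text \<open>Separation schema: one instance per formula, with arbitrary parameters
(the variable 0 of the formula is the separated variable).\<close>

definition ax_separation :: "'a set \<Rightarrow> ('a \<Rightarrow> 'a \<Rightarrow> bool) \<Rightarrow> ('a \<Rightarrow> bool) \<Rightarrow> bool" where
  "ax_separation D E Ur \<longleftrightarrow>
     (\<forall>\<phi> env. range env \<subseteq> D \<longrightarrow>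
        (\<forall>x\<in>D. \<not> Ur x \<longrightarrow>
           (\<exists>y\<in>D. \<not> Ur y \<and> (\<forall>z\<in>D. E z y \<longleftrightarrow> (E z x \<and> sat D E Ur (env(0 := z)) \<phi>)))))"

text \<open>Replacement schema: variables 0 and 1 of the formula are the argument and the
value; the others are parameters.\<close>

definition ax_replacement :: "'a set \<Rightarrow> ('a \<Rightarrow> 'a \<Rightarrow> bool) \<Rightarrow> ('a \<Rightarrow> bool) \<Rightarrow> bool" where
  "ax_replacement D E Ur \<longleftrightarrow>
     (\<forall>\<phi> env. range env \<subseteq> D \<longrightarrow>
        (\<forall>x\<in>D. \<not> Ur x \<longrightarrow>
           (\<forall>u\<in>D. E u x \<longrightarrow>
               (\<exists>v\<in>D. sat D E Ur (env(0 := u, 1 := v)) \<phi>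
                  \<and> (\<forall>v'\<in>D. sat D E Ur (env(0 := u, 1 := v')) \<phi> \<longrightarrow> v' = v))) \<longrightarrow>
           (\<exists>y\<in>D. \<not> Ur y \<and>
               (\<forall>v\<in>D. E v y \<longleftrightarrow> (\<exists>u\<in>D. E u x \<and> sat D E Ur (env(0 := u, 1 := v)) \<phi>)))))"

definition ax_choice :: "'a set \<Rightarrow> ('a \<Rightarrow> 'a \<Rightarrow> bool) \<Rightarrow> ('a \<Rightarrow> bool) \<Rightarrow> bool" where
  "ax_choice D E Ur \<longleftrightarrow>
     (\<forall>x\<in>D. \<not> Ur x \<longrightarrow>
        (\<forall>y\<in>D. E y x \<longrightarrow> \<not> Ur y \<and> (\<exists>z\<in>D. E z y)) \<longrightarrow>
        (\<forall>y1\<in>D. \<forall>y2\<in>D. E y1 x \<longrightarrow> E y2 x \<longrightarrow> y1 \<noteq> y2 \<longrightarrow> \<not> (\<exists>z\<in>D. E z y1 \<and> E z y2)) \<longrightarrow>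
        (\<exists>c\<in>D. \<not> Ur c \<and>
           (\<forall>y\<in>D. E y x \<longrightarrow>
              (\<exists>z\<in>D. E z c \<and> E z y \<and> (\<forall>z'\<in>D. E z' c \<longrightarrow> E z' y \<longrightarrow> z' = z)))))"

definition ZFCU_R :: "'a set \<Rightarrow> ('a \<Rightarrow> 'a \<Rightarrow> bool) \<Rightarrow> ('a \<Rightarrow> bool) \<Rightarrow> bool" where
  "ZFCU_R D E Ur \<longleftrightarrow> D \<noteq> {}
     \<and> ax_urelements D E Ur \<and> ax_extensionality D E Ur \<and> ax_foundation D E Ur
     \<and> ax_pairing D E Ur \<and> ax_union D E Ur \<and> ax_powerset D E Ur \<and> ax_infinity D E Ur
     \<and> ax_separation D E Ur \<and> ax_replacement D E Ur \<and> ax_choice D E Ur"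

definition A_proper_class :: "'a set \<Rightarrow> ('a \<Rightarrow> 'a \<Rightarrow> bool) \<Rightarrow> ('a \<Rightarrow> bool) \<Rightarrow> bool" where
  "A_proper_class D E Ur \<longleftrightarrow> \<not> (\<exists>s\<in>D. \<not> Ur s \<and> (\<forall>a\<in>D. E a s \<longleftrightarrow> Ur a))"

definition is_transitive :: "'a set \<Rightarrow> ('a \<Rightarrow> 'a \<Rightarrow> bool) \<Rightarrow> ('a \<Rightarrow> bool) \<Rightarrow> 'a \<Rightarrow> bool" where
  "is_transitive D E Ur t \<longleftrightarrow> \<not> Ur t \<and>
     (\<forall>y\<in>D. E y t \<longrightarrow> \<not> Ur y \<longrightarrow> (\<forall>z\<in>D. E z y \<longrightarrow> E z t))"

definition is_TC_singleton :: "'a set \<Rightarrow> ('a \<Rightarrow> 'a \<Rightarrow> bool) \<Rightarrow> ('a \<Rightarrow> bool) \<Rightarrow> 'a \<Rightarrow> 'a \<Rightarrow> bool" where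
  "is_TC_singleton D E Ur x t \<longleftrightarrow> is_transitive D E Ur t \<and> E x t \<and>
     (\<forall>t'\<in>D. is_transitive D E Ur t' \<longrightarrow> E x t' \<longrightarrow> (\<forall>z\<in>D. E z t \<longrightarrow> E z t'))"

definition is_ker :: "'a set \<Rightarrow> ('a \<Rightarrow> 'a \<Rightarrow> bool) \<Rightarrow> ('a \<Rightarrow> bool) \<Rightarrow> 'a \<Rightarrow> 'a \<Rightarrow> bool" where
  "is_ker D E Ur x k \<longleftrightarrow> \<not> Ur k \<and>
     (\<exists>t\<in>D. is_TC_singleton D E Ur x t \<and> (\<forall>a\<in>D. E a k \<longleftrightarrow> (E a t \<and> Ur a)))"

text \<open>A-ideal (a class I given by a predicate on the domain).  Following the usual
convention that ideals are nonempty, we also require I to be nonempty.\<close>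

definition is_A_ideal :: "'a set \<Rightarrow> ('a \<Rightarrow> 'a \<Rightarrow> bool) \<Rightarrow> ('a \<Rightarrow> bool) \<Rightarrow> ('a \<Rightarrow> bool) \<Rightarrow> bool" where
  "is_A_ideal D E Ur I \<longleftrightarrow>
     (\<exists>k\<in>D. I k)
     \<and> (\<forall>k\<in>D. I k \<longrightarrow> \<not> Ur k \<and> (\<forall>y\<in>D. E y k \<longrightarrow> Ur y))
     \<and> (\<forall>s\<in>D. (\<not> Ur s \<and> (\<forall>a\<in>D. E a s \<longleftrightarrow> Ur a)) \<longrightarrow> \<not> I s)
     \<and> (\<forall>x\<in>D. \<forall>y\<in>D. \<forall>u\<in>D. I x \<longrightarrow> I y \<longrightarrow> \<not> Ur u \<longrightarrow>
           (\<forall>z\<in>D. E z u \<longleftrightarrow> (E z x \<or> E z y)) \<longrightarrow> I u)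
     \<and> (\<forall>x\<in>D. \<forall>y\<in>D. I x \<longrightarrow> \<not> Ur y \<longrightarrow> (\<forall>z\<in>D. E z y \<longrightarrow> E z x) \<longrightarrow> I y)
     \<and> (\<forall>a\<in>D. \<forall>s\<in>D. Ur a \<longrightarrow> \<not> Ur s \<longrightarrow> (\<forall>z\<in>D. E z s \<longleftrightarrow> z = a) \<longrightarrow> I s)"

definition U_I :: "'a set \<Rightarrow> ('a \<Rightarrow> 'a \<Rightarrow> bool) \<Rightarrow> ('a \<Rightarrow> bool) \<Rightarrow> ('a \<Rightarrow> bool) \<Rightarrow> 'a set" where
  "U_I D E Ur I = {x\<in>D. \<exists>k\<in>D. is_ker D E Ur x k \<and> I k}"

end

theory Submission
  imports Defs
begin

definition Or :: "fm \<Rightarrow> fm \<Rightarrow> fm" where "Or p q = Neg (Conj (Neg p) (Neg q))"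
definition Imp :: "fm \<Rightarrow> fm \<Rightarrow> fm" where "Imp p q = Neg (Conj p (Neg q))"
definition Iff :: "fm \<Rightarrow> fm \<Rightarrow> fm" where "Iff p q = Conj (Imp p q) (Imp q p)"
definition All :: "nat \<Rightarrow> fm \<Rightarrow> fm" where "All i p = Neg (Ex i (Neg p))"

lemma sat_Or[simp]: "sat D E Ur env (Or p q) = (sat D E Ur env p \<or> sat D E Ur env q)"
  by (simp add: Or_def)
lemma sat_Imp[simp]: "sat D E Ur env (Imp p q) = (sat D E Ur env p \<longrightarrow> sat D E Ur env q)"
  by (simp add: Imp_def)
lemma sat_Iff[simp]: "sat D E Ur env (Iff p q) = (sat D E Ur env p \<longleftrightarrow> sat D E Ur env q)"
  by (auto simp add: Iff_def)
lemma sat_All[simp]: "sat D E Ur env (All i p) = (\<forall>d\<in>D. sat D E Ur (env(i := d)) p)"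
  by (simp add: All_def)

locale M =
  fixes D :: "'a set" and E :: "'a \<Rightarrow> 'a \<Rightarrow> bool" and Ur :: "'a \<Rightarrow> bool"
  assumes zf: "ZFCU_R D E Ur"
begin

lemma nonempty: "D \<noteq> {}" using zf by (simp add: ZFCU_R_def)

lemma urel: "a \<in> D \<Longrightarrow> Ur a \<Longrightarrow> z \<in> D \<Longrightarrow> \<not> E z a"
  using zf by (auto simp add: ZFCU_R_def ax_urelements_def)

lemma ext: "x \<in> D \<Longrightarrow> y \<in> D \<Longrightarrow> \<not> Ur x \<Longrightarrow> \<not> Ur y \<Longrightarrow> (\<And>z. z \<in> D \<Longrightarrow> E z x \<longleftrightarrow> E z y) \<Longrightarrow> x = y"
  using zf unfolding ZFCU_R_def ax_extensionality_def by blast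

lemma found: "x \<in> D \<Longrightarrow> y0 \<in> D \<Longrightarrow> E y0 x \<Longrightarrow> \<exists>y\<in>D. E y x \<and> \<not> (\<exists>z\<in>D. E z y \<and> E z x)"
  using zf unfolding ZFCU_R_def ax_foundation_def by blast

lemma pairing: "x \<in> D \<Longrightarrow> y \<in> D \<Longrightarrow> \<exists>p\<in>D. \<not> Ur p \<and> (\<forall>z\<in>D. E z p \<longleftrightarrow> (z = x \<or> z = y))"
  using zf unfolding ZFCU_R_def ax_pairing_def by blast

lemma union: "x \<in> D \<Longrightarrow> \<not> Ur x \<Longrightarrow> \<exists>u\<in>D. \<not> Ur u \<and> (\<forall>z\<in>D. E z u \<longleftrightarrow> (\<exists>y\<in>D. E y x \<and> E z y))"
  using zf unfolding ZFCU_R_def ax_union_def by blast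

lemma powerset: "x \<in> D \<Longrightarrow> \<not> Ur x \<Longrightarrow> \<exists>p\<in>D. \<not> Ur p \<and>
        (\<forall>y\<in>D. E y p \<longleftrightarrow> (\<not> Ur y \<and> (\<forall>z\<in>D. E z y \<longrightarrow> E z x)))"
  using zf unfolding ZFCU_R_def ax_powerset_def by blast

lemma infinity: "\<exists>w\<in>D. \<not> Ur w
        \<and> (\<exists>e\<in>D. \<not> Ur e \<and> (\<forall>z\<in>D. \<not> E z e) \<and> E e w)
        \<and> (\<forall>y\<in>D. E y w \<longrightarrow>
              (\<exists>s\<in>D. \<not> Ur s \<and> E s w \<and> (\<forall>z\<in>D. E z s \<longleftrightarrow> (E z y \<or> z = y))))"
  using zf unfolding ZFCU_R_def ax_infinity_def by blast

lemma sep: "range env \<subseteq> D \<Longrightarrow> x \<in> D \<Longrightarrow> \<not> Ur x \<Longrightarrow>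
  \<exists>y\<in>D. \<not> Ur y \<and> (\<forall>z\<in>D. E z y \<longleftrightarrow> (E z x \<and> sat D E Ur (env(0 := z)) \<phi>))"
  using zf unfolding ZFCU_R_def ax_separation_def by blast

lemma repl: "range env \<subseteq> D \<Longrightarrow> x \<in> D \<Longrightarrow> \<not> Ur x \<Longrightarrow>
   (\<forall>u\<in>D. E u x \<longrightarrow>
               (\<exists>v\<in>D. sat D E Ur (env(0 := u, 1 := v)) \<phi>
                  \<and> (\<forall>v'\<in>D. sat D E Ur (env(0 := u, 1 := v')) \<phi> \<longrightarrow> v' = v))) \<Longrightarrow>
           (\<exists>y\<in>D. \<not> Ur y \<and>
               (\<forall>v\<in>D. E v y \<longleftrightarrow> (\<exists>u\<in>D. E u x \<and> sat D E Ur (env(0 := u, 1 := v)) \<phi>)))"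
  using zf unfolding ZFCU_R_def ax_replacement_def by blast

lemma choice: "x \<in> D \<Longrightarrow> \<not> Ur x \<Longrightarrow>
        (\<forall>y\<in>D. E y x \<longrightarrow> \<not> Ur y \<and> (\<exists>z\<in>D. E z y)) \<Longrightarrow>
        (\<forall>y1\<in>D. \<forall>y2\<in>D. E y1 x \<longrightarrow> E y2 x \<longrightarrow> y1 \<noteq> y2 \<longrightarrow> \<not> (\<exists>z\<in>D. E z y1 \<and> E z y2)) \<Longrightarrow>
        (\<exists>c\<in>D. \<not> Ur c \<and>
           (\<forall>y\<in>D. E y x \<longrightarrow>
              (\<exists>z\<in>D. E z c \<and> E z y \<and> (\<forall>z'\<in>D. E z' c \<longrightarrow> E z' y \<longrightarrow> z' = z))))"
  using zf unfolding ZFCU_R_def ax_choice_def by blast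

lemma bunion: "x \<in> D \<Longrightarrow> y \<in> D \<Longrightarrow> \<not> Ur x \<Longrightarrow> \<not> Ur y \<Longrightarrow>
   \<exists>u\<in>D. \<not> Ur u \<and> (\<forall>z\<in>D. E z u \<longleftrightarrow> (E z x \<or> E z y))"
proof -
  assume a: "x \<in> D" "y \<in> D" "\<not> Ur x" "\<not> Ur y"
  obtain p where p: "p \<in> D" "\<not> Ur p" "\<forall>z\<in>D. E z p \<longleftrightarrow> (z = x \<or> z = y)" using pairing[OF a(1) a(2)] by blast
  obtain u where u: "u \<in> D" "\<not> Ur u" "\<forall>z\<in>D. E z u \<longleftrightarrow> (\<exists>w\<in>D. E w p \<and> E z w)"
    using union p by blast
  have "\<forall>z\<in>D. E z u \<longleftrightarrow> (E z x \<or> E z y)"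
  proof
    fix z assume z: "z \<in> D"
    have "E z u \<longleftrightarrow> (\<exists>w\<in>D. E w p \<and> E z w)" using u z by blast
    also have "\<dots> \<longleftrightarrow> (E z x \<or> E z y)"
    proof
      assume "\<exists>w\<in>D. E w p \<and> E z w"
      then obtain w where w: "w \<in> D" "E w p" "E z w" by blast
      then have "w = x \<or> w = y" using p(3) by blast
      then show "E z x \<or> E z y" using w by blast
    next
      assume h: "E z x \<or> E z y"
      have "E x p" "E y p" using p(3) a by auto
      then show "\<exists>w\<in>D. E w p \<and> E z w" using h a by blast
    qed
    finally show "E z u \<longleftrightarrow> (E z x \<or> E z y)" .
  qed
  then show ?thesis using u by blast
qed

definition ispair where
 "ispair q a b \<longleftrightarrow> \<not> Ur q \<and> (\<forall>x\<in>D. E x q \<longleftrightarrow>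
     ((\<not> Ur x \<and> (\<forall>y\<in>D. E y x \<longleftrightarrow> y = a)) \<or> (\<not> Ur x \<and> (\<forall>y\<in>D. E y x \<longleftrightarrow> (y = a \<or> y = b)))))"

lemma sing_ex: "a \<in> D \<Longrightarrow> \<exists>s\<in>D. \<not> Ur s \<and> (\<forall>z\<in>D. E z s \<longleftrightarrow> z = a)"
proof -
  assume a: "a \<in> D"
  obtain s where s: "s \<in> D" "\<not> Ur s" "\<forall>z\<in>D. E z s \<longleftrightarrow> (z = a \<or> z = a)" using pairing a by blast
  have "\<forall>z\<in>D. E z s \<longleftrightarrow> z = a" using s(3) by simp
  then show ?thesis using s by blast
qed

lemma ext_char: "x \<in> D \<Longrightarrow> s \<in> D \<Longrightarrow> \<not> Ur x \<Longrightarrow> \<not> Ur s \<Longrightarrow> \<forall>z\<in>D. E z s \<longleftrightarrow> P z \<Longrightarrow>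
   \<forall>z\<in>D. E z x \<longleftrightarrow> P z \<Longrightarrow> x = s"
  by (rule ext) auto

lemma pair_ex: "a \<in> D \<Longrightarrow> b \<in> D \<Longrightarrow> \<exists>q\<in>D. ispair q a b"
proof -
  assume ab: "a \<in> D" "b \<in> D"
  obtain s where s: "s \<in> D" "\<not> Ur s" "\<forall>z\<in>D. E z s \<longleftrightarrow> z = a" using sing_ex[OF ab(1)] by blast
  obtain d where d: "d \<in> D" "\<not> Ur d" "\<forall>z\<in>D. E z d \<longleftrightarrow> (z = a \<or> z = b)" using pairing[OF ab] by blast
  obtain q where q: "q \<in> D" "\<not> Ur q" "\<forall>z\<in>D. E z q \<longleftrightarrow> (z = s \<or> z = d)" using pairing[OF s(1) d(1)] by blast
  have "\<forall>x\<in>D. E x q \<longleftrightarrow>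
     ((\<not> Ur x \<and> (\<forall>y\<in>D. E y x \<longleftrightarrow> y = a)) \<or> (\<not> Ur x \<and> (\<forall>y\<in>D. E y x \<longleftrightarrow> (y = a \<or> y = b))))"
  proof
    fix x assume x: "x \<in> D"
    have "E x q \<longleftrightarrow> x = s \<or> x = d" using q(3) x by blast
    also have "\<dots> \<longleftrightarrow> ((\<not> Ur x \<and> (\<forall>y\<in>D. E y x \<longleftrightarrow> y = a)) \<or> (\<not> Ur x \<and> (\<forall>y\<in>D. E y x \<longleftrightarrow> (y = a \<or> y = b))))"
    proof
      assume "x = s \<or> x = d"
      then show "((\<not> Ur x \<and> (\<forall>y\<in>D. E y x \<longleftrightarrow> y = a)) \<or> (\<not> Ur x \<and> (\<forall>y\<in>D. E y x \<longleftrightarrow> (y = a \<or> y = b))))"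
        using s d by (elim disjE) simp_all
    next
      assume "((\<not> Ur x \<and> (\<forall>y\<in>D. E y x \<longleftrightarrow> y = a)) \<or> (\<not> Ur x \<and> (\<forall>y\<in>D. E y x \<longleftrightarrow> (y = a \<or> y = b))))"
      then show "x = s \<or> x = d"
      proof
        assume "\<not> Ur x \<and> (\<forall>y\<in>D. E y x \<longleftrightarrow> y = a)"
        then have "x = s" using ext_char[OF x s(1), of "\<lambda>z. z = a"] s by blast
        then show ?thesis by simp
      next
        assume "\<not> Ur x \<and> (\<forall>y\<in>D. E y x \<longleftrightarrow> (y = a \<or> y = b))"
        then have "x = d" using ext_char[OF x d(1), of "\<lambda>z. z = a \<or> z = b"] d by blast
        then show ?thesis by simp
      qed
    qed
    finally show "E x q \<longleftrightarrow> ((\<not> Ur x \<and> (\<forall>y\<in>D. E y x \<longleftrightarrow> y = a)) \<or> (\<not> Ur x \<and> (\<forall>y\<in>D. E y x \<longleftrightarrow> (y = a \<or> y = b))))" .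
  qed
  then show ?thesis using q unfolding ispair_def by blast
qed

lemma ispairD: "ispair q a b \<Longrightarrow> x \<in> D \<Longrightarrow> E x q \<longleftrightarrow>
   (\<not> Ur x \<and> ((\<forall>y\<in>D. E y x \<longleftrightarrow> y = a) \<or> (\<forall>y\<in>D. E y x \<longleftrightarrow> (y = a \<or> y = b))))"
  unfolding ispair_def by blast

lemma pair_uniq: assumes "q \<in> D" "q' \<in> D" "ispair q a b" "ispair q' a b" shows "q = q'"
proof (rule ext)
  show "\<not> Ur q" "\<not> Ur q'" using assms unfolding ispair_def by auto
  fix z assume "z \<in> D"
  then show "E z q = E z q'" using ispairD[OF assms(3)] ispairD[OF assms(4)] by simp
qed (use assms in auto)

lemma pair_inj: assumes "q \<in> D" "a \<in> D" "b \<in> D" "a' \<in> D" "b' \<in> D" "ispair q a b" "ispair q a' b'"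
  shows "a = a' \<and> b = b'"
proof -
  obtain s where s: "s \<in> D" "\<not> Ur s" "\<forall>z\<in>D. E z s \<longleftrightarrow> (z = a \<or> z = a)" using pairing[OF assms(2) assms(2)] by blast
  obtain d where d: "d \<in> D" "\<not> Ur d" "\<forall>z\<in>D. E z d \<longleftrightarrow> (z = a \<or> z = b)" using pairing[OF assms(2) assms(3)] by blast
  obtain d' where d': "d' \<in> D" "\<not> Ur d'" "\<forall>z\<in>D. E z d' \<longleftrightarrow> (z = a' \<or> z = b')" using pairing[OF assms(4) assms(5)] by blast
  have s1: "\<forall>z\<in>D. E z s \<longleftrightarrow> z = a" using s by simp
  have "E s q" using ispairD[OF assms(6) s(1)] s1 s by blast
  then have "(\<forall>y\<in>D. E y s \<longleftrightarrow> y = a') \<or> (\<forall>y\<in>D. E y s \<longleftrightarrow> (y = a' \<or> y = b'))"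
    using ispairD[OF assms(7) s(1)] by blast
  then have aa: "a' = a" using s1 assms by metis
  have "E d q" using ispairD[OF assms(6) d(1)] d by blast
  then have "(\<forall>y\<in>D. E y d \<longleftrightarrow> y = a') \<or> (\<forall>y\<in>D. E y d \<longleftrightarrow> (y = a' \<or> y = b'))"
    using ispairD[OF assms(7) d(1)] by blast
  then have bb: "b = a \<or> b = b'" using d aa assms by metis
  have "E d' q" using ispairD[OF assms(7) d'(1)] d' by blast
  then have "(\<forall>y\<in>D. E y d' \<longleftrightarrow> y = a) \<or> (\<forall>y\<in>D. E y d' \<longleftrightarrow> (y = a \<or> y = b))"
    using ispairD[OF assms(6) d'(1)] by blast
  then have "b' = a \<or> b' = b" using d' aa assms by metis
  then show ?thesis using aa bb by auto
qed

end

definition TransF :: "nat \<Rightarrow> nat \<Rightarrow> nat \<Rightarrow> fm" where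
  "TransF t a b = Conj (Neg (Urel t)) (All a (Imp (Conj (Mem a t) (Neg (Urel a))) (All b (Imp (Mem b a) (Mem b t)))))"

lemma sat_TransF[simp]: "a \<noteq> t \<Longrightarrow> b \<noteq> t \<Longrightarrow> b \<noteq> a \<Longrightarrow>
  sat D E Ur e (TransF t a b) = is_transitive D E Ur (e t)"
  unfolding TransF_def is_transitive_def by (simp add: imp_conjL)

definition TCsingF :: "nat \<Rightarrow> nat \<Rightarrow> nat \<Rightarrow> nat \<Rightarrow> nat \<Rightarrow> fm" where
  "TCsingF x t a b c = Conj (TransF t a b) (Conj (Mem x t) (All a (Imp (Conj (TransF a b c) (Mem x a)) (All b (Imp (Mem b t) (Mem b a))))))"

lemma sat_TCsingF[simp]: assumes "distinct [x,t,a,b,c]" shows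
  "sat D E Ur e (TCsingF x t a b c) = is_TC_singleton D E Ur (e x) (e t)"
proof -
  have 1: "sat D E Ur e (TransF t a b) = is_transitive D E Ur (e t)" by (rule sat_TransF) (use assms in auto)
  have 2: "\<And>d. sat D E Ur (e(a:=d)) (TransF a b c) = is_transitive D E Ur d"
    by (subst sat_TransF) (use assms in auto)
  show ?thesis unfolding TCsingF_def is_TC_singleton_def using assms by (simp add: imp_conjL 1 2)
qed

lemma sat_TCs01[simp]: "sat D E Ur (e(0:=u,1:=v)) (TCsingF 0 1 2 3 4) = is_TC_singleton D E Ur u v"
  by (subst sat_TCsingF) auto

context M begin

abbreviation "istr t \<equiv> is_transitive D E Ur t"

definition kerset where "kerset z a \<longleftrightarrow> a \<in> D \<and> Ur a \<and> (\<forall>t\<in>D. istr t \<longrightarrow> E z t \<longrightarrow> E a t)"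
definition haveTC where "haveTC z \<longleftrightarrow> (\<exists>t\<in>D. istr t \<and> E z t)"

lemma transD: "istr t \<Longrightarrow> y \<in> D \<Longrightarrow> z \<in> D \<Longrightarrow> E y t \<Longrightarrow> E z y \<Longrightarrow> E z t"
proof -
  assume a: "istr t" "y \<in> D" "z \<in> D" "E y t" "E z y"
  have "\<not> Ur y" using a urel by blast
  then show ?thesis using a unfolding is_transitive_def by blast
qed

lemma nonUr_mem: "x \<in> D \<Longrightarrow> v \<in> D \<Longrightarrow> E v x \<Longrightarrow> \<not> Ur x"
  using urel by blast

lemma TC_ex: assumes z: "z \<in> D" "haveTC z" shows "\<exists>t\<in>D. is_TC_singleton D E Ur z t"
proof -
  obtain t0 where t0: "t0 \<in> D" "istr t0" "E z t0" using z unfolding haveTC_def by blast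
  have nu: "\<not> Ur t0" using t0 unfolding is_transitive_def by blast
  let ?phi = "All 2 (Imp (Conj (TransF 2 3 4) (Mem 1 2)) (Mem 0 2))"
  have r: "range (\<lambda>_. z) \<subseteq> D" using z by auto
  obtain t where t: "t \<in> D" "\<not> Ur t" "\<forall>a\<in>D. E a t \<longleftrightarrow> (E a t0 \<and> sat D E Ur ((\<lambda>_. z)(0 := a)) ?phi)"
    using sep[OF r t0(1) nu, of ?phi] by blast
  have t': "\<forall>a\<in>D. E a t \<longleftrightarrow> (E a t0 \<and> (\<forall>t'\<in>D. istr t' \<longrightarrow> E z t' \<longrightarrow> E a t'))"
    using t(3) by (simp add: imp_conjL)
  have "istr t" unfolding is_transitive_def
  proof (intro conjI ballI impI)
    show "\<not> Ur t" by fact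
    fix y w assume h0: "y \<in> D" "E y t" "\<not> Ur y" "w \<in> D" "E w y"
    have h: "y \<in> D" "E y t" "w \<in> D" "E w y" using h0 by auto
    have "E y t0" using t' h by blast
    then have "E w t0" using transD[OF t0(2) h(1) h(3)] h by blast
    moreover have "\<forall>t'\<in>D. istr t' \<longrightarrow> E z t' \<longrightarrow> E w t'"
    proof (intro ballI impI)
      fix t' assume "t' \<in> D" "istr t'" "E z t'"
      then have "E y t'" using t' h by blast
      then show "E w t'" using transD[OF \<open>istr t'\<close> h(1) h(3)] h by blast
    qed
    ultimately show "E w t" using t' h by blast
  qed
  moreover have "E z t" using t' t0 z by blast
  moreover have "\<forall>t'\<in>D. istr t' \<longrightarrow> E z t' \<longrightarrow> (\<forall>a\<in>D. E a t \<longrightarrow> E a t')"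
    using t' by blast
  ultimately show ?thesis using t(1) unfolding is_TC_singleton_def by blast
qed

lemma TC_uniq: "t \<in> D \<Longrightarrow> t' \<in> D \<Longrightarrow> is_TC_singleton D E Ur z t \<Longrightarrow> is_TC_singleton D E Ur z t' \<Longrightarrow> t = t'"
proof -
  assume a: "t \<in> D" "t' \<in> D" "is_TC_singleton D E Ur z t" "is_TC_singleton D E Ur z t'"
  have tt: "istr t" "istr t'" "E z t" "E z t'" using a(3,4) unfolding is_TC_singleton_def by blast+
  have m1: "\<forall>y\<in>D. E y t \<longrightarrow> E y t'" using a(3) a(2) tt(2,4) unfolding is_TC_singleton_def by blast
  have m2: "\<forall>y\<in>D. E y t' \<longrightarrow> E y t" using a(4) a(1) tt(1,3) unfolding is_TC_singleton_def by blast
  have "\<not> Ur t" "\<not> Ur t'" using tt(1,2) unfolding is_transitive_def by blast+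
  then show "t = t'" using ext[OF a(1,2)] m1 m2 by blast
qed

lemma kerset_TC: "t \<in> D \<Longrightarrow> is_TC_singleton D E Ur z t \<Longrightarrow> kerset z a \<longleftrightarrow> (a \<in> D \<and> Ur a \<and> E a t)"
  unfolding kerset_def is_TC_singleton_def by blast

lemma kerset_mem: "x \<in> D \<Longrightarrow> v \<in> D \<Longrightarrow> E v x \<Longrightarrow> kerset v a \<Longrightarrow> kerset x a"
  unfolding kerset_def using transD by blast

lemma haveTC_mem: "x \<in> D \<Longrightarrow> v \<in> D \<Longrightarrow> E v x \<Longrightarrow> haveTC x \<Longrightarrow> haveTC v"
  unfolding haveTC_def using transD by blast

lemma kersetD: "kerset z a \<Longrightarrow> a \<in> D \<and> Ur a" unfolding kerset_def by blast

lemma Ur_TC: assumes "a \<in> D" "Ur a" shows "haveTC a" "kerset a b \<Longrightarrow> b = a"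
proof -
  obtain s where s: "s \<in> D" "\<not> Ur s" "\<forall>z\<in>D. E z s \<longleftrightarrow> z = a" using sing_ex[OF assms(1)] by blast
  have trs: "istr s" unfolding is_transitive_def
  proof (intro conjI ballI impI)
    show "\<not> Ur s" by fact
    fix y w assume y: "y \<in> D" "E y s" "\<not> Ur y" "w \<in> D" "E w y"
    have "y = a" using s(3) y(1,2) by blast
    then show "E w s" using y(3) assms(2) by simp
  qed
  moreover have "E a s" using s(3) assms(1) by blast
  ultimately show "haveTC a" using s(1) unfolding haveTC_def by blast
  assume "kerset a b"
  then have "E b s" using trs \<open>E a s\<close> s(1) unfolding kerset_def by blast
  then show "b = a" using s(3) \<open>kerset a b\<close> kersetD by blast
qed

end

locale MI = M +
  fixes \<psi> :: fm and p :: "nat \<Rightarrow> 'a"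
  assumes prange: "range p \<subseteq> D"
  and ideal: "is_A_ideal D E Ur (\<lambda>k. sat D E Ur (p(0 := k)) \<psi>)"
begin

abbreviation "II \<equiv> (\<lambda>k. sat D E Ur (p(0 := k)) \<psi>)"
abbreviation "UU \<equiv> U_I D E Ur II"

lemma id_ne: "\<exists>k\<in>D. II k" using ideal unfolding is_A_ideal_def by blast
lemma id_sets: "k \<in> D \<Longrightarrow> II k \<Longrightarrow> \<not> Ur k" using ideal unfolding is_A_ideal_def by blast
lemma id_elems: "k \<in> D \<Longrightarrow> II k \<Longrightarrow> y \<in> D \<Longrightarrow> E y k \<Longrightarrow> Ur y"
proof -
  assume a: "k \<in> D" "II k" "y \<in> D" "E y k"
  have "\<forall>k\<in>D. II k \<longrightarrow> \<not> Ur k \<and> (\<forall>y\<in>D. E y k \<longrightarrow> Ur y)" using ideal unfolding is_A_ideal_def by (elim conjE)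
  then show "Ur y" using a by blast
qed
lemma id_notA: "s \<in> D \<Longrightarrow> \<not> Ur s \<Longrightarrow> (\<forall>a\<in>D. E a s \<longleftrightarrow> Ur a) \<Longrightarrow> \<not> II s"
  using ideal unfolding is_A_ideal_def by blast
lemma id_un: "x \<in> D \<Longrightarrow> y \<in> D \<Longrightarrow> u \<in> D \<Longrightarrow> II x \<Longrightarrow> II y \<Longrightarrow> \<not> Ur u \<Longrightarrow>
   (\<forall>z\<in>D. E z u \<longleftrightarrow> (E z x \<or> E z y)) \<Longrightarrow> II u"
  using ideal unfolding is_A_ideal_def by blast
lemma id_sub: "x \<in> D \<Longrightarrow> y \<in> D \<Longrightarrow> II x \<Longrightarrow> \<not> Ur y \<Longrightarrow> (\<forall>z\<in>D. E z y \<longrightarrow> E z x) \<Longrightarrow> II y"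
  using ideal unfolding is_A_ideal_def by blast
lemma id_sing: "a \<in> D \<Longrightarrow> s \<in> D \<Longrightarrow> Ur a \<Longrightarrow> \<not> Ur s \<Longrightarrow> (\<forall>z\<in>D. E z s \<longleftrightarrow> z = a) \<Longrightarrow> II s"
  using ideal unfolding is_A_ideal_def by blast

definition small where "small P \<longleftrightarrow> (\<exists>K\<in>D. II K \<and> (\<forall>a\<in>D. P a \<longrightarrow> E a K))"

lemma small_mono: "small P \<Longrightarrow> (\<And>a. a \<in> D \<Longrightarrow> Q a \<Longrightarrow> P a) \<Longrightarrow> small Q"
  unfolding small_def by blast

lemma small_un: assumes "small P" "small Q" shows "small (\<lambda>a. P a \<or> Q a)"
proof -
  obtain K1 where K1: "K1 \<in> D" "II K1" "\<forall>a\<in>D. P a \<longrightarrow> E a K1" using assms(1) unfolding small_def by blast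
  obtain K2 where K2: "K2 \<in> D" "II K2" "\<forall>a\<in>D. Q a \<longrightarrow> E a K2" using assms(2) unfolding small_def by blast
  obtain u where u: "u \<in> D" "\<not> Ur u" "\<forall>z\<in>D. E z u \<longleftrightarrow> (E z K1 \<or> E z K2)"
    using bunion[OF K1(1) K2(1) id_sets[OF K1(1,2)] id_sets[OF K2(1,2)]] by blast
  have "II u" using id_un[OF K1(1) K2(1) u(1) K1(2) K2(2) u(2) u(3)] .
  then show ?thesis unfolding small_def using u K1 K2 by blast
qed

lemma small_sing: assumes "c \<in> D" "Ur c" shows "small (\<lambda>a. a = c)"
proof -
  obtain s where s: "s \<in> D" "\<not> Ur s" "\<forall>z\<in>D. E z s \<longleftrightarrow> z = c" using sing_ex[OF assms(1)] by blast
  have "II s" using id_sing[OF assms(1) s(1) assms(2) s(2) s(3)] .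
  then show ?thesis unfolding small_def using s assms by blast
qed

lemma small_empty: "small (\<lambda>a. False)"
  using id_ne unfolding small_def by blast

lemma small_notall: assumes "small P" shows "\<exists>a\<in>D. Ur a \<and> \<not> P a"
proof (rule ccontr)
  assume h: "\<not> (\<exists>a\<in>D. Ur a \<and> \<not> P a)"
  obtain K where K: "K \<in> D" "II K" "\<forall>a\<in>D. P a \<longrightarrow> E a K" using assms unfolding small_def by blast
  have "\<forall>a\<in>D. E a K \<longleftrightarrow> Ur a"
  proof
    fix a assume a: "a \<in> D"
    show "E a K \<longleftrightarrow> Ur a"
    proof
      assume "E a K" then show "Ur a" using id_elems[OF K(1,2) a] by blast
    next
      assume "Ur a" then have "P a" using h a by blast
      then show "E a K" using K(3) a by blast
    qed
  qed
  then show False using id_notA[OF K(1) id_sets[OF K(1,2)]] K(2) by blast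
qed

lemma U_iff: "z \<in> UU \<longleftrightarrow> z \<in> D \<and> haveTC z \<and> small (kerset z)"
proof
  assume "z \<in> UU"
  then obtain k where k: "z \<in> D" "k \<in> D" "is_ker D E Ur z k" "II k" unfolding U_I_def by blast
  obtain t where t: "t \<in> D" "is_TC_singleton D E Ur z t" "\<forall>a\<in>D. E a k \<longleftrightarrow> (E a t \<and> Ur a)"
    using k(3) unfolding is_ker_def by blast
  have "haveTC z" using t unfolding haveTC_def is_TC_singleton_def by blast
  moreover have "small (kerset z)" unfolding small_def
    using k t kerset_TC[OF t(1,2)] by blast
  ultimately show "z \<in> D \<and> haveTC z \<and> small (kerset z)" using k by blast
next
  assume h: "z \<in> D \<and> haveTC z \<and> small (kerset z)"
  obtain t where t: "t \<in> D" "is_TC_singleton D E Ur z t" using TC_ex[of z] h by blast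
  obtain K where K: "K \<in> D" "II K" "\<forall>a\<in>D. kerset z a \<longrightarrow> E a K" using h unfolding small_def by blast
  have nt: "\<not> Ur t" using t unfolding is_TC_singleton_def is_transitive_def by blast
  have r: "range (\<lambda>_. z) \<subseteq> D" using h by auto
  obtain k where k: "k \<in> D" "\<not> Ur k" "\<forall>a\<in>D. E a k \<longleftrightarrow> (E a t \<and> sat D E Ur ((\<lambda>_. z)(0 := a)) (Urel 0))"
    using sep[OF r t(1) nt, of "Urel 0"] by blast
  have k': "\<forall>a\<in>D. E a k \<longleftrightarrow> (E a t \<and> Ur a)" using k(3) by simp
  have "is_ker D E Ur z k" unfolding is_ker_def using k(2) k' t by blast
  moreover have "II k"
  proof (rule id_sub[OF K(1) k(1) K(2) k(2)])
    show "\<forall>za\<in>D. E za k \<longrightarrow> E za K" using k' K kerset_TC[OF t(1,2)] by blast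
  qed
  ultimately show "z \<in> UU" unfolding U_I_def using h k by blast
qed

lemma U_D: "z \<in> UU \<Longrightarrow> z \<in> D" unfolding U_I_def by blast
lemma U_haveTC: "z \<in> UU \<Longrightarrow> haveTC z" using U_iff by blast
lemma U_small: "z \<in> UU \<Longrightarrow> small (kerset z)" using U_iff by blast
lemma U_intro: "z \<in> D \<Longrightarrow> haveTC z \<Longrightarrow> small (kerset z) \<Longrightarrow> z \<in> UU" using U_iff by blast

lemma U_trans: assumes "x \<in> UU" "v \<in> D" "E v x" shows "v \<in> UU"
proof -
  have x: "x \<in> D" "haveTC x" "small (kerset x)" using assms U_iff by blast+
  have "haveTC v" using haveTC_mem[OF x(1) assms(2,3) x(2)] .
  moreover have "small (kerset v)" using small_mono[OF x(3)] kerset_mem[OF x(1) assms(2,3)] by blast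
  ultimately show ?thesis using U_iff assms by blast
qed

lemma U_Ur: assumes "a \<in> D" "Ur a" shows "a \<in> UU"
proof -
  have "small (kerset a)" using small_mono[OF small_sing[OF assms]] Ur_TC(2)[OF assms] by blast
  then show ?thesis using U_iff Ur_TC(1)[OF assms] assms by blast
qed

lemma KB2: assumes x: "x \<in> D" "\<not> Ur x" and el: "\<forall>v\<in>D. E v x \<longrightarrow> v \<in> UU \<and> (\<forall>a. kerset v a \<longrightarrow> P a)"
  and sP: "small P" shows "x \<in> UU \<and> (\<forall>a. kerset x a \<longrightarrow> P a)"
proof -
  have r: "range (\<lambda>_. x) \<subseteq> D" using x by auto
  have "\<forall>u\<in>D. E u x \<longrightarrow>
               (\<exists>v\<in>D. sat D E Ur (((\<lambda>_. x))(0 := u, 1 := v)) (TCsingF 0 1 2 3 4)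
                  \<and> (\<forall>v'\<in>D. sat D E Ur (((\<lambda>_. x))(0 := u, 1 := v')) (TCsingF 0 1 2 3 4) \<longrightarrow> v' = v))"
  proof (intro ballI impI)
    fix u assume u: "u \<in> D" "E u x"
    have "u \<in> UU" using el u by blast
    then have "haveTC u" by (rule U_haveTC)
    then obtain t where t: "t \<in> D" "is_TC_singleton D E Ur u t" using TC_ex[OF u(1)] by blast
    have "\<forall>v'\<in>D. is_TC_singleton D E Ur u v' \<longrightarrow> v' = t" using TC_uniq[OF _ t(1) _ t(2)] by blast
    then show "\<exists>v\<in>D. sat D E Ur (((\<lambda>_. x))(0 := u, 1 := v)) (TCsingF 0 1 2 3 4)
                  \<and> (\<forall>v'\<in>D. sat D E Ur (((\<lambda>_. x))(0 := u, 1 := v')) (TCsingF 0 1 2 3 4) \<longrightarrow> v' = v)"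
      using t by (simp only: sat_TCs01) blast
  qed
  from repl[OF r x this] obtain R where R: "R \<in> D" "\<not> Ur R"
    "\<forall>v\<in>D. E v R \<longleftrightarrow> (\<exists>u\<in>D. E u x \<and> sat D E Ur (((\<lambda>_. x))(0 := u, 1 := v)) (TCsingF 0 1 2 3 4))"
    by blast
  have R': "\<forall>v\<in>D. E v R \<longleftrightarrow> (\<exists>u\<in>D. E u x \<and> is_TC_singleton D E Ur u v)" using R(3) by (simp only: sat_TCs01)
  obtain Uu where Uu: "Uu \<in> D" "\<not> Ur Uu" "\<forall>z\<in>D. E z Uu \<longleftrightarrow> (\<exists>y\<in>D. E y R \<and> E z y)"
    using union[OF R(1,2)] by blast
  obtain S where S: "S \<in> D" "\<not> Ur S" "\<forall>z\<in>D. E z S \<longleftrightarrow> z = x" using sing_ex[OF x(1)] by blast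
  obtain T where T: "T \<in> D" "\<not> Ur T" "\<forall>z\<in>D. E z T \<longleftrightarrow> (E z Uu \<or> E z S)"
    using bunion[OF Uu(1) S(1) Uu(2) S(2)] by blast
  have memT: "\<And>z. z \<in> D \<Longrightarrow> E z T \<longleftrightarrow> (z = x \<or> (\<exists>u\<in>D. \<exists>t\<in>D. E u x \<and> is_TC_singleton D E Ur u t \<and> E z t))"
  proof -
    fix z assume z: "z \<in> D"
    have 1: "E z T \<longleftrightarrow> (E z Uu \<or> E z S)" using T(3) z by (rule bspec)
    have 2: "E z S \<longleftrightarrow> z = x" using S(3) z by (rule bspec)
    have 3: "E z Uu \<longleftrightarrow> (\<exists>y\<in>D. E y R \<and> E z y)" using Uu(3) z by (rule bspec)
    have 4: "(\<exists>y\<in>D. E y R \<and> E z y) \<longleftrightarrow> (\<exists>u\<in>D. \<exists>t\<in>D. E u x \<and> is_TC_singleton D E Ur u t \<and> E z t)"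
    proof
      assume "\<exists>y\<in>D. E y R \<and> E z y"
      then obtain y where y: "y \<in> D" "E y R" "E z y" by blast
      then obtain u where "u \<in> D" "E u x" "is_TC_singleton D E Ur u y" using R' by blast
      then show "\<exists>u\<in>D. \<exists>t\<in>D. E u x \<and> is_TC_singleton D E Ur u t \<and> E z t" using y by blast
    next
      assume "\<exists>u\<in>D. \<exists>t\<in>D. E u x \<and> is_TC_singleton D E Ur u t \<and> E z t"
      then obtain u t where ut: "u \<in> D" "t \<in> D" "E u x" "is_TC_singleton D E Ur u t" "E z t" by blast
      then have "E t R" using R' by blast
      then show "\<exists>y\<in>D. E y R \<and> E z y" using ut by blast
    qed
    show "E z T \<longleftrightarrow> (z = x \<or> (\<exists>u\<in>D. \<exists>t\<in>D. E u x \<and> is_TC_singleton D E Ur u t \<and> E z t))"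
      using 1 2 3 4 by blast
  qed
  have trT: "istr T" unfolding is_transitive_def
  proof (intro conjI ballI impI)
    show "\<not> Ur T" by fact
    fix y w assume h0: "y \<in> D" "E y T" "\<not> Ur y" "w \<in> D" "E w y"
    have h: "y \<in> D" "E y T" "w \<in> D" "E w y" using h0 by auto
    then have "y = x \<or> (\<exists>u\<in>D. \<exists>t\<in>D. E u x \<and> is_TC_singleton D E Ur u t \<and> E y t)" using memT by blast
    then show "E w T"
    proof
      assume "y = x"
      then have "E w x" using h by simp
      moreover have "w \<in> UU" using el h \<open>E w x\<close> by blast
      then have "haveTC w" by (rule U_haveTC)
      then obtain t where t: "t \<in> D" "is_TC_singleton D E Ur w t" using TC_ex[OF h(3)] by blast
      ultimately show "E w T" using memT[OF h(3)] h(3) t unfolding is_TC_singleton_def by blast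
    next
      assume "\<exists>u\<in>D. \<exists>t\<in>D. E u x \<and> is_TC_singleton D E Ur u t \<and> E y t"
      then obtain u t where ut: "u \<in> D" "t \<in> D" "E u x" "is_TC_singleton D E Ur u t" "E y t" by blast
      have "istr t" using ut unfolding is_TC_singleton_def by blast
      then have "E w t" using transD[OF _ h(1) h(3) ut(5)] h by blast
      then show "E w T" using memT[OF h(3)] ut by blast
    qed
  qed
  have xT: "E x T" using memT[OF x(1)] by blast
  have "haveTC x" unfolding haveTC_def using trT xT T(1) by blast
  moreover have kb: "\<forall>a. kerset x a \<longrightarrow> P a"
  proof (intro allI impI)
    fix a assume a0: "kerset x a"
    then have a: "a \<in> D" "kerset x a" using kersetD by blast+
    have "E a T" using a trT xT T(1) unfolding kerset_def by blast
    moreover have "a \<noteq> x" using a x unfolding kerset_def by blast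
    ultimately obtain u t where ut: "u \<in> D" "t \<in> D" "E u x" "is_TC_singleton D E Ur u t" "E a t"
      using memT[OF a(1)] by blast
    have "kerset u a" using kerset_TC[OF ut(2) ut(4)] a ut kersetD by blast
    then show "P a" using el ut by blast
  qed
  moreover have "small (kerset x)" using small_mono[OF sP] kb by blast
  ultimately show ?thesis using U_intro x by blast
qed

lemma KB: assumes x: "x \<in> D" "\<not> Ur x" and el: "\<forall>v\<in>D. E v x \<longrightarrow> v \<in> UU \<and> (\<forall>a. kerset v a \<longrightarrow> P a)"
  and sP: "small P" shows "x \<in> UU"
  using KB2[OF x el sP] by blast

end

context MI begin

lemma kerset_el: "s \<in> D \<Longrightarrow> a \<in> D \<Longrightarrow> Ur a \<Longrightarrow> E a s \<Longrightarrow> kerset s a"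
  unfolding kerset_def using transD by blast

lemma U_nonempty: "UU \<noteq> {}"
proof -
  obtain w e where e: "e \<in> D" "\<not> Ur e" "\<forall>z\<in>D. \<not> E z e" using infinity by blast
  have "e \<in> UU" using KB[OF e(1,2) _ small_empty] e(3) by blast
  then show ?thesis by blast
qed

lemma U_urel: "ax_urelements UU E Ur"
  unfolding ax_urelements_def using urel U_D by blast

lemma U_ext: "ax_extensionality UU E Ur"
  unfolding ax_extensionality_def
proof (intro ballI impI)
  fix x y assume xy: "x \<in> UU" "y \<in> UU" "\<not> Ur x" "\<not> Ur y" and h: "\<forall>z\<in>UU. E z x \<longleftrightarrow> E z y"
  show "x = y"
  proof (rule ext[OF U_D[OF xy(1)] U_D[OF xy(2)] xy(3,4)])
    fix z assume z: "z \<in> D"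
    show "E z x \<longleftrightarrow> E z y"
    proof
      assume "E z x" then have "z \<in> UU" using U_trans[OF xy(1) z] by blast
      then show "E z y" using h \<open>E z x\<close> by blast
    next
      assume "E z y" then have "z \<in> UU" using U_trans[OF xy(2) z] by blast
      then show "E z x" using h \<open>E z y\<close> by blast
    qed
  qed
qed

lemma U_found: "ax_foundation UU E Ur"
  unfolding ax_foundation_def
proof (intro ballI impI)
  fix x assume x: "x \<in> UU" and "\<exists>y\<in>UU. E y x"
  then obtain y0 where y0: "y0 \<in> UU" "E y0 x" by blast
  obtain y where y: "y \<in> D" "E y x" "\<not> (\<exists>z\<in>D. E z y \<and> E z x)"
    using found[OF U_D[OF x] U_D[OF y0(1)] y0(2)] by blast
  have "y \<in> UU" using U_trans[OF x y(1,2)] .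
  then show "\<exists>y\<in>UU. E y x \<and> \<not> (\<exists>z\<in>UU. E z y \<and> E z x)" using y U_D by blast
qed

lemma U_pairing: "ax_pairing UU E Ur"
  unfolding ax_pairing_def
proof (intro ballI)
  fix x y assume xy: "x \<in> UU" "y \<in> UU"
  obtain p where p: "p \<in> D" "\<not> Ur p" "\<forall>z\<in>D. E z p \<longleftrightarrow> (z = x \<or> z = y)"
    using pairing[OF U_D[OF xy(1)] U_D[OF xy(2)]] by blast
  have "p \<in> UU"
  proof (rule KB[OF p(1,2) _ small_un[OF U_small[OF xy(1)] U_small[OF xy(2)]]])
    show "\<forall>v\<in>D. E v p \<longrightarrow> v \<in> UU \<and> (\<forall>a. kerset v a \<longrightarrow> kerset x a \<or> kerset y a)"
    proof (intro ballI impI)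
      fix v assume "v \<in> D" "E v p"
      then have "v = x \<or> v = y" using p(3) by blast
      then show "v \<in> UU \<and> (\<forall>a. kerset v a \<longrightarrow> kerset x a \<or> kerset y a)" using xy by blast
    qed
  qed
  moreover have "\<forall>z\<in>UU. E z p \<longleftrightarrow> (z = x \<or> z = y)" using p(3) U_D by blast
  ultimately show "\<exists>p\<in>UU. \<not> Ur p \<and> (\<forall>z\<in>UU. E z p \<longleftrightarrow> (z = x \<or> z = y))" using p(2) by blast
qed

lemma U_union: "ax_union UU E Ur"
  unfolding ax_union_def
proof (intro ballI impI)
  fix x assume x: "x \<in> UU" "\<not> Ur x"
  have xD: "x \<in> D" using U_D[OF x(1)] .
  obtain u where u: "u \<in> D" "\<not> Ur u" "\<forall>z\<in>D. E z u \<longleftrightarrow> (\<exists>y\<in>D. E y x \<and> E z y)"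
    using union[OF xD x(2)] by blast
  have "u \<in> UU"
  proof (rule KB[OF u(1,2) _ U_small[OF x(1)]])
    show "\<forall>v\<in>D. E v u \<longrightarrow> v \<in> UU \<and> (\<forall>a. kerset v a \<longrightarrow> kerset x a)"
    proof (intro ballI impI)
      fix v assume v: "v \<in> D" "E v u"
      then obtain y where y: "y \<in> D" "E y x" "E v y" using u(3) by blast
      have yU: "y \<in> UU" using U_trans[OF x(1) y(1,2)] .
      have "v \<in> UU" using U_trans[OF yU v(1) y(3)] .
      moreover have "\<forall>a. kerset v a \<longrightarrow> kerset x a"
        using kerset_mem[OF y(1) v(1) y(3)] kerset_mem[OF xD y(1) y(2)] by blast
      ultimately show "v \<in> UU \<and> (\<forall>a. kerset v a \<longrightarrow> kerset x a)" by blast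
    qed
  qed
  moreover have "\<forall>z\<in>UU. E z u \<longleftrightarrow> (\<exists>y\<in>UU. E y x \<and> E z y)"
  proof
    fix z assume z: "z \<in> UU"
    have "E z u \<longleftrightarrow> (\<exists>y\<in>D. E y x \<and> E z y)" using u(3) U_D[OF z] by (rule bspec)
    also have "\<dots> \<longleftrightarrow> (\<exists>y\<in>UU. E y x \<and> E z y)" using U_D U_trans[OF x(1)] by blast
    finally show "E z u \<longleftrightarrow> (\<exists>y\<in>UU. E y x \<and> E z y)" .
  qed
  ultimately show "\<exists>u\<in>UU. \<not> Ur u \<and> (\<forall>z\<in>UU. E z u \<longleftrightarrow> (\<exists>y\<in>UU. E y x \<and> E z y))" using u(2) by blast
qed

lemma U_powerset: "ax_powerset UU E Ur"
  unfolding ax_powerset_def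
proof (intro ballI impI)
  fix x assume x: "x \<in> UU" "\<not> Ur x"
  have xD: "x \<in> D" using U_D[OF x(1)] .
  obtain p where p: "p \<in> D" "\<not> Ur p" "\<forall>y\<in>D. E y p \<longleftrightarrow> (\<not> Ur y \<and> (\<forall>z\<in>D. E z y \<longrightarrow> E z x))"
    using powerset[OF xD x(2)] by blast
  have sub: "y \<in> UU \<and> (\<forall>a. kerset y a \<longrightarrow> kerset x a)" if y: "y \<in> D" "\<not> Ur y" "\<forall>z\<in>D. E z y \<longrightarrow> E z x" for y
  proof (rule KB2[OF y(1,2) _ U_small[OF x(1)]])
    show "\<forall>v\<in>D. E v y \<longrightarrow> v \<in> UU \<and> (\<forall>a. kerset v a \<longrightarrow> kerset x a)"
    proof (intro ballI impI)
      fix v assume v: "v \<in> D" "E v y"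
      then have vx: "E v x" using y(3) by blast
      then show "v \<in> UU \<and> (\<forall>a. kerset v a \<longrightarrow> kerset x a)"
        using U_trans[OF x(1) v(1) vx] kerset_mem[OF xD v(1) vx] by blast
    qed
  qed
  have "p \<in> UU"
  proof (rule KB[OF p(1,2) _ U_small[OF x(1)]])
    show "\<forall>v\<in>D. E v p \<longrightarrow> v \<in> UU \<and> (\<forall>a. kerset v a \<longrightarrow> kerset x a)"
    proof (intro ballI impI)
      fix v assume v: "v \<in> D" "E v p"
      then have "\<not> Ur v \<and> (\<forall>z\<in>D. E z v \<longrightarrow> E z x)" using p(3) by blast
      then show "v \<in> UU \<and> (\<forall>a. kerset v a \<longrightarrow> kerset x a)" using sub[OF v(1)] by blast
    qed
  qed
  moreover have "\<forall>y\<in>UU. E y p \<longleftrightarrow> (\<not> Ur y \<and> (\<forall>z\<in>UU. E z y \<longrightarrow> E z x))"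
  proof
    fix y assume y: "y \<in> UU"
    have "E y p \<longleftrightarrow> (\<not> Ur y \<and> (\<forall>z\<in>D. E z y \<longrightarrow> E z x))" using p(3) U_D[OF y] by (rule bspec)
    also have "\<dots> \<longleftrightarrow> (\<not> Ur y \<and> (\<forall>z\<in>UU. E z y \<longrightarrow> E z x))" using U_D U_trans[OF y] by blast
    finally show "E y p \<longleftrightarrow> (\<not> Ur y \<and> (\<forall>z\<in>UU. E z y \<longrightarrow> E z x))" .
  qed
  ultimately show "\<exists>p\<in>UU. \<not> Ur p \<and> (\<forall>y\<in>UU. E y p \<longleftrightarrow> (\<not> Ur y \<and> (\<forall>z\<in>UU. E z y \<longrightarrow> E z x)))"
    using p(2) by blast
qed

lemma U_proper: "A_proper_class UU E Ur"
  unfolding A_proper_class_def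
proof
  assume "\<exists>s\<in>UU. \<not> Ur s \<and> (\<forall>a\<in>UU. E a s \<longleftrightarrow> Ur a)"
  then obtain s where s: "s \<in> UU" "\<not> Ur s" "\<forall>a\<in>UU. E a s \<longleftrightarrow> Ur a" by blast
  obtain a where a: "a \<in> D" "Ur a" "\<not> kerset s a" using small_notall[OF U_small[OF s(1)]] by blast
  have "a \<in> UU" using U_Ur[OF a(1,2)] .
  then have "E a s" using s(3) a(2) by blast
  then show False using kerset_el[OF U_D[OF s(1)] a(1,2)] a(3) by blast
qed

end

context MI begin

definition pure where "pure n \<longleftrightarrow> (\<exists>t\<in>D. istr t \<and> E n t \<and> (\<forall>a\<in>D. E a t \<longrightarrow> \<not> Ur a))"

lemma pure_U: assumes "n \<in> D" "pure n" shows "n \<in> UU" "kerset n a \<Longrightarrow> False"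
proof -
  obtain t where t: "t \<in> D" "istr t" "E n t" "\<forall>a\<in>D. E a t \<longrightarrow> \<not> Ur a" using assms(2) unfolding pure_def by blast
  have nk: "\<not> kerset n a" for a using t unfolding kerset_def by blast
  have "haveTC n" using t unfolding haveTC_def by blast
  moreover have "small (kerset n)" using small_mono[OF small_empty] nk by blast
  ultimately show "n \<in> UU" using U_intro assms(1) by blast
  show "kerset n a \<Longrightarrow> False" using nk by blast
qed

lemma U_infinity: "ax_infinity UU E Ur"
proof -
  obtain w e where w: "w \<in> D" "\<not> Ur w" and e: "e \<in> D" "\<not> Ur e" "\<forall>z\<in>D. \<not> E z e" "E e w"
    and suc: "\<forall>y\<in>D. E y w \<longrightarrow>
              (\<exists>s\<in>D. \<not> Ur s \<and> E s w \<and> (\<forall>z\<in>D. E z s \<longleftrightarrow> (E z y \<or> z = y)))"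
    using infinity by blast
  let ?phi = "Ex 1 (Conj (TransF 1 2 3) (Conj (Mem 0 1) (All 2 (Imp (Mem 2 1) (Neg (Urel 2))))))"
  have r: "range (\<lambda>_. w) \<subseteq> D" using w by auto
  obtain w' where w': "w' \<in> D" "\<not> Ur w'" "\<forall>z\<in>D. E z w' \<longleftrightarrow> (E z w \<and> sat D E Ur ((\<lambda>_. w)(0 := z)) ?phi)"
    using sep[OF r w(1,2), of ?phi] by blast
  have w'': "\<forall>z\<in>D. E z w' \<longleftrightarrow> (E z w \<and> pure z)" using w'(3) unfolding pure_def by simp
  have "w' \<in> UU"
  proof (rule KB[OF w'(1,2) _ small_empty])
    show "\<forall>v\<in>D. E v w' \<longrightarrow> v \<in> UU \<and> (\<forall>a. kerset v a \<longrightarrow> False)"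
      using w'' pure_U by blast
  qed
  moreover have "\<exists>e\<in>UU. \<not> Ur e \<and> (\<forall>z\<in>UU. \<not> E z e) \<and> E e w'"
  proof -
    obtain s where s: "s \<in> D" "\<not> Ur s" "\<forall>z\<in>D. E z s \<longleftrightarrow> z = e" using sing_ex[OF e(1)] by blast
    have "istr s" unfolding is_transitive_def
    proof (intro conjI ballI impI)
      show "\<not> Ur s" by fact
      fix y z assume yz: "y \<in> D" "E y s" "\<not> Ur y" "z \<in> D" "E z y"
      have "y = e" using s(3) yz(1,2) by blast
      then show "E z s" using e(3) yz by blast
    qed
    moreover have "\<forall>a\<in>D. E a s \<longrightarrow> \<not> Ur a"
    proof (intro ballI impI)
      fix a assume "a \<in> D" "E a s" then have "a = e" using s(3) by blast
      then show "\<not> Ur a" using e(2) by simp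
    qed
    moreover have "E e s" using s(3) e(1) by blast
    ultimately have "pure e" unfolding pure_def using s(1) by blast
    then have "E e w'" using w'' e(1,4) by blast
    moreover have "e \<in> UU" using pure_U(1)[OF e(1) \<open>pure e\<close>] .
    ultimately show ?thesis using e(2,3) U_D by blast
  qed
  moreover have "\<forall>y\<in>UU. E y w' \<longrightarrow>
              (\<exists>s\<in>UU. \<not> Ur s \<and> E s w' \<and> (\<forall>z\<in>UU. E z s \<longleftrightarrow> (E z y \<or> z = y)))"
  proof (intro ballI impI)
    fix y assume y: "y \<in> UU" "E y w'"
    have yD: "y \<in> D" using U_D[OF y(1)] .
    have yw: "E y w" "pure y" using w'' y(2) yD by blast+
    obtain s where s: "s \<in> D" "\<not> Ur s" "E s w" "\<forall>z\<in>D. E z s \<longleftrightarrow> (E z y \<or> z = y)"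
      using suc yD yw(1) by blast
    obtain t where t: "t \<in> D" "istr t" "E y t" "\<forall>a\<in>D. E a t \<longrightarrow> \<not> Ur a" using yw(2) unfolding pure_def by blast
    obtain ss where ss: "ss \<in> D" "\<not> Ur ss" "\<forall>z\<in>D. E z ss \<longleftrightarrow> z = s" using sing_ex[OF s(1)] by blast
    have tnu: "\<not> Ur t" using t(2) unfolding is_transitive_def by blast
    obtain T where T: "T \<in> D" "\<not> Ur T" "\<forall>z\<in>D. E z T \<longleftrightarrow> (E z t \<or> E z ss)"
      using bunion[OF t(1) ss(1) tnu ss(2)] by blast
    have memT: "\<And>z. z \<in> D \<Longrightarrow> E z T \<longleftrightarrow> (E z t \<or> z = s)" using T(3) ss(3) by blast
    have "istr T" unfolding is_transitive_def
    proof (intro conjI ballI impI)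
      show "\<not> Ur T" by fact
      fix a b assume ab: "a \<in> D" "E a T" "\<not> Ur a" "b \<in> D" "E b a"
      have "E a t \<or> a = s" using memT[OF ab(1)] ab(2) by blast
      then show "E b T"
      proof
        assume "E a t" then have "E b t" using transD[OF t(2) ab(1) ab(4)] ab(5) by blast
        then show "E b T" using memT[OF ab(4)] by blast
      next
        assume "a = s" then have "E b y \<or> b = y" using s(4) ab(4,5) by blast
        then have "E b t" using transD[OF t(2) yD ab(4) t(3)] t(3) by blast
        then show "E b T" using memT[OF ab(4)] by blast
      qed
    qed
    moreover have "E s T" using memT[OF s(1)] by blast
    moreover have "\<forall>a\<in>D. E a T \<longrightarrow> \<not> Ur a"
    proof (intro ballI impI)
      fix a assume a: "a \<in> D" "E a T"
      then have "E a t \<or> a = s" using memT by blast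
      then show "\<not> Ur a" using t(4) a(1) s(2) by blast
    qed
    ultimately have "pure s" unfolding pure_def using T(1) by blast
    then have "E s w'" using w'' s(1,3) by blast
    moreover have "s \<in> UU" using pure_U(1)[OF s(1) \<open>pure s\<close>] .
    moreover have "\<forall>z\<in>UU. E z s \<longleftrightarrow> (E z y \<or> z = y)" using s(4) U_D by blast
    ultimately show "\<exists>s\<in>UU. \<not> Ur s \<and> E s w' \<and> (\<forall>z\<in>UU. E z s \<longleftrightarrow> (E z y \<or> z = y))" using s(2) by blast
  qed
  ultimately show ?thesis unfolding ax_infinity_def using w'(2) by blast
qed

lemma U_choice: "ax_choice UU E Ur"
  unfolding ax_choice_def
proof (intro ballI impI)
  fix x assume x: "x \<in> UU" "\<not> Ur x"
    and ne: "\<forall>y\<in>UU. E y x \<longrightarrow> \<not> Ur y \<and> (\<exists>z\<in>UU. E z y)"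
    and dj: "\<forall>y1\<in>UU. \<forall>y2\<in>UU. E y1 x \<longrightarrow> E y2 x \<longrightarrow> y1 \<noteq> y2 \<longrightarrow> \<not> (\<exists>z\<in>UU. E z y1 \<and> E z y2)"
  have xD: "x \<in> D" using U_D[OF x(1)] .
  have ne': "\<forall>y\<in>D. E y x \<longrightarrow> \<not> Ur y \<and> (\<exists>z\<in>D. E z y)"
  proof (intro ballI impI)
    fix y assume y: "y \<in> D" "E y x"
    then have "y \<in> UU" using U_trans[OF x(1)] by blast
    then show "\<not> Ur y \<and> (\<exists>z\<in>D. E z y)" using ne y U_D by blast
  qed
  have dj': "\<forall>y1\<in>D. \<forall>y2\<in>D. E y1 x \<longrightarrow> E y2 x \<longrightarrow> y1 \<noteq> y2 \<longrightarrow> \<not> (\<exists>z\<in>D. E z y1 \<and> E z y2)"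
  proof (intro ballI impI notI)
    fix y1 y2 assume y: "y1 \<in> D" "y2 \<in> D" "E y1 x" "E y2 x" "y1 \<noteq> y2" "\<exists>z\<in>D. E z y1 \<and> E z y2"
    then obtain z where z: "z \<in> D" "E z y1" "E z y2" by blast
    have u: "y1 \<in> UU" "y2 \<in> UU" using U_trans[OF x(1)] y by blast+
    then have "z \<in> UU" using U_trans z by blast
    then show False using dj u y z by blast
  qed
  obtain c where c: "c \<in> D" "\<not> Ur c" "\<forall>y\<in>D. E y x \<longrightarrow>
              (\<exists>z\<in>D. E z c \<and> E z y \<and> (\<forall>z'\<in>D. E z' c \<longrightarrow> E z' y \<longrightarrow> z' = z))"
    using choice[OF xD x(2) ne' dj'] by blast
  let ?phi = "Ex 2 (Conj (Mem 2 1) (Mem 0 2))"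
  have r: "range (\<lambda>_. x) \<subseteq> D" using xD by auto
  obtain c' where c': "c' \<in> D" "\<not> Ur c'" "\<forall>z\<in>D. E z c' \<longleftrightarrow> (E z c \<and> sat D E Ur ((\<lambda>_. x)(0 := z)) ?phi)"
    using sep[OF r c(1,2), of ?phi] by blast
  have c'': "\<forall>z\<in>D. E z c' \<longleftrightarrow> (E z c \<and> (\<exists>y\<in>D. E y x \<and> E z y))" using c'(3) by simp
  have "c' \<in> UU"
  proof (rule KB[OF c'(1,2) _ U_small[OF x(1)]])
    show "\<forall>v\<in>D. E v c' \<longrightarrow> v \<in> UU \<and> (\<forall>a. kerset v a \<longrightarrow> kerset x a)"
    proof (intro ballI impI)
      fix v assume v: "v \<in> D" "E v c'"
      then obtain y where y: "y \<in> D" "E y x" "E v y" using c'' by blast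
      have yU: "y \<in> UU" using U_trans[OF x(1) y(1,2)] .
      have "v \<in> UU" using U_trans[OF yU v(1) y(3)] .
      moreover have "\<forall>a. kerset v a \<longrightarrow> kerset x a"
        using kerset_mem[OF y(1) v(1) y(3)] kerset_mem[OF xD y(1) y(2)] by blast
      ultimately show "v \<in> UU \<and> (\<forall>a. kerset v a \<longrightarrow> kerset x a)" by blast
    qed
  qed
  moreover have "\<forall>y\<in>UU. E y x \<longrightarrow>
              (\<exists>z\<in>UU. E z c' \<and> E z y \<and> (\<forall>z'\<in>UU. E z' c' \<longrightarrow> E z' y \<longrightarrow> z' = z))"
  proof (intro ballI impI)
    fix y assume y: "y \<in> UU" "E y x"
    have yD: "y \<in> D" using U_D[OF y(1)] .
    obtain z where z: "z \<in> D" "E z c" "E z y" "\<forall>z'\<in>D. E z' c \<longrightarrow> E z' y \<longrightarrow> z' = z"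
      using c(3) yD y(2) by blast
    have zc': "E z c'" using c'' z yD y(2) by blast
    have zU: "z \<in> UU" using U_trans[OF y(1) z(1) z(3)] .
    have "\<forall>z'\<in>UU. E z' c' \<longrightarrow> E z' y \<longrightarrow> z' = z"
    proof (intro ballI impI)
      fix z' assume z': "z' \<in> UU" "E z' c'" "E z' y"
      have "E z' c" using c'' z' U_D by blast
      then show "z' = z" using z(4) z' U_D by blast
    qed
    then show "\<exists>z\<in>UU. E z c' \<and> E z y \<and> (\<forall>z'\<in>UU. E z' c' \<longrightarrow> E z' y \<longrightarrow> z' = z)"
      using zU zc' z(3) by blast
  qed
  ultimately show "\<exists>c\<in>UU. \<not> Ur c \<and>
           (\<forall>y\<in>UU. E y x \<longrightarrow>
              (\<exists>z\<in>UU. E z c \<and> E z y \<and> (\<forall>z'\<in>UU. E z' c \<longrightarrow> E z' y \<longrightarrow> z' = z)))"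
    using c'(2) by blast
qed

end

fun ren :: "(nat \<Rightarrow> nat) \<Rightarrow> fm \<Rightarrow> fm" where
  "ren f (Mem i j) = Mem (f i) (f j)"
| "ren f (Equ i j) = Equ (f i) (f j)"
| "ren f (Urel i) = Urel (f i)"
| "ren f (Neg q) = Neg (ren f q)"
| "ren f (Conj q r) = Conj (ren f q) (ren f r)"
| "ren f (Ex i q) = Ex (f i) (ren f q)"

lemma sat_ren: "inj f \<Longrightarrow> sat D E Ur e (ren f q) = sat D E Ur (e \<circ> f) q"
proof (induction q arbitrary: e)
  case (Ex i q)
  have fe: "\<And>d. (e(f i := d)) \<circ> f = (e \<circ> f)(i := d)"
    using Ex.prems by (auto simp: fun_eq_iff inj_eq)
  have "sat D E Ur e (ren f (Ex i q)) = (\<exists>d\<in>D. sat D E Ur ((e(f i := d)) \<circ> f) q)"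
    by (simp only: ren.simps sat.simps Ex.IH[OF Ex.prems])
  also have "\<dots> = (\<exists>d\<in>D. sat D E Ur ((e \<circ> f)(i := d)) q)" by (simp only: fe)
  also have "\<dots> = sat D E Ur (e \<circ> f) (Ex i q)" by (simp only: sat.simps)
  finally show ?case .
qed simp_all

definition KerF :: "nat \<Rightarrow> nat \<Rightarrow> nat \<Rightarrow> fm" where
  "KerF k t a = All a (Iff (Mem a k) (Conj (Mem a t) (Urel a)))"

definition InU :: "fm \<Rightarrow> nat \<Rightarrow> fm" where
  "InU \<psi> j = Ex 1 (Ex 2 (Conj (TCsingF j 2 5 8 11) (Conj (KerF 1 2 5) (Conj (Neg (Urel 1)) (ren (\<lambda>i. 3*i+1) \<psi>)))))"

fun rel :: "fm \<Rightarrow> fm \<Rightarrow> fm" where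
  "rel \<psi> (Mem i j) = Mem (3*i) (3*j)"
| "rel \<psi> (Equ i j) = Equ (3*i) (3*j)"
| "rel \<psi> (Urel i) = Urel (3*i)"
| "rel \<psi> (Neg q) = Neg (rel \<psi> q)"
| "rel \<psi> (Conj q r) = Conj (rel \<psi> q) (rel \<psi> r)"
| "rel \<psi> (Ex i q) = Ex (3*i) (Conj (InU \<psi> (3*i)) (rel \<psi> q))"

lemma inj_31: "inj (\<lambda>i::nat. Suc (3*i))" by (auto simp: inj_def)

context MI begin

definition good where "good e \<longleftrightarrow> (\<forall>i>0. e (3*i+1) = p i)"

lemma sat_InU: assumes "good e" "j mod 3 = 0" "e j \<in> D"
  shows "sat D E Ur e (InU \<psi> j) \<longleftrightarrow> e j \<in> UU"
proof -
  have j: "j \<noteq> 1" "j \<noteq> 2" "j \<noteq> 5" "j \<noteq> 8" "j \<noteq> 11" using assms(2) by auto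
  have dj: "distinct [j,2,5,8,11::nat]" using j by simp
  have eq: "(e(Suc 0 := k, 2 := t)) \<circ> (\<lambda>i. Suc (3*i)) = p(0 := k)" for k t
  proof
    fix i show "((e(Suc 0 := k, 2 := t)) \<circ> (\<lambda>i. Suc (3*i))) i = (p(0 := k)) i"
      using assms(1) unfolding good_def by (cases "i = 0") auto
  qed
  have eq2: "sat D E Ur (e(Suc 0 := k, 2 := t)) (ren (\<lambda>i. Suc (3 * i)) \<psi>) = II k" for k t
    by (simp only: sat_ren[OF inj_31] eq)
  have "sat D E Ur e (InU \<psi> j) \<longleftrightarrow> (\<exists>k\<in>D. \<exists>t\<in>D. is_TC_singleton D E Ur (e j) t \<and>
      (\<forall>a\<in>D. E a k \<longleftrightarrow> (E a t \<and> Ur a)) \<and> \<not> Ur k \<and> II k)"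
    unfolding InU_def KerF_def using j
    by (simp add: eq2 sat_TCsingF[OF dj])
  also have "\<dots> \<longleftrightarrow> e j \<in> UU"
    unfolding U_I_def is_ker_def using assms(3) by blast
  finally show ?thesis .
qed

lemma good_upd: "good e \<Longrightarrow> i mod 3 \<noteq> 1 \<or> i = 1 \<Longrightarrow> good (e(i := d))"
  unfolding good_def by auto

lemma sat_rel: "good e \<Longrightarrow> (\<forall>i. e (3*i) \<in> UU) \<Longrightarrow>
   sat D E Ur e (rel \<psi> q) \<longleftrightarrow> sat UU E Ur (\<lambda>i. e (3*i)) q"
proof (induction q arbitrary: e)
  case (Ex i q)
  have "sat D E Ur e (rel \<psi> (Ex i q)) \<longleftrightarrow> (\<exists>d\<in>D. d \<in> UU \<and> sat D E Ur (e(3*i := d)) (rel \<psi> q))"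
  proof -
    have "\<And>d. d \<in> D \<Longrightarrow> sat D E Ur (e(3*i := d)) (InU \<psi> (3*i)) \<longleftrightarrow> d \<in> UU"
      using sat_InU[OF good_upd[OF Ex.prems(1)]] by simp
    then show ?thesis by simp
  qed
  also have "\<dots> \<longleftrightarrow> (\<exists>d\<in>UU. sat UU E Ur ((\<lambda>i. e (3*i))(i := d)) q)"
  proof -
    have fe: "(\<lambda>i'. (e(3*i := d)) (3*i')) = (\<lambda>i. e (3*i))(i := d)" for d
      by (auto simp: fun_eq_iff)
    have "d \<in> UU \<Longrightarrow> sat D E Ur (e(3*i := d)) (rel \<psi> q) \<longleftrightarrow> sat UU E Ur ((\<lambda>i. e (3*i))(i := d)) q" for d
    proof -
      assume d: "d \<in> UU"
      have "good (e(3*i := d))" using good_upd[OF Ex.prems(1)] by simp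
      moreover have "\<forall>i'. (e(3*i := d)) (3*i') \<in> UU"
      proof
        fix i' show "(e(3*i := d)) (3*i') \<in> UU"
        proof (cases "i' = i")
          case True then show ?thesis using d by simp
        next
          case False then have "(e(3*i := d)) (3*i') = e (3*i')" by simp
          then show ?thesis using Ex.prems(2) by metis
        qed
      qed
      ultimately show ?thesis using Ex.IH fe by metis
    qed
    then show ?thesis using U_D by blast
  qed
  finally show ?case by (simp only: sat.simps)
qed simp_all

lemma U_separation: "ax_separation UU E Ur"
  unfolding ax_separation_def
proof (intro allI impI ballI)
  fix \<phi> :: fm and env :: "nat \<Rightarrow> 'a" and x assume env: "range env \<subseteq> UU" and x: "x \<in> UU" "\<not> Ur x"
  define e where "e = (\<lambda>n. if n mod 3 = 0 then env (n div 3) else if n mod 3 = 1 then p (n div 3) else p 0)"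
  have h3: "Suc (3*i) div 3 = i" "Suc (3*i) mod 3 = 1" for i :: nat by presburger+
  have gd: "good e" unfolding good_def e_def using h3 by simp
  have rD: "range e \<subseteq> D" unfolding e_def using env prange U_D by auto
  have xD: "x \<in> D" using U_D[OF x(1)] .
  obtain y where y: "y \<in> D" "\<not> Ur y" "\<forall>z\<in>D. E z y \<longleftrightarrow> (E z x \<and> sat D E Ur (e(0 := z)) (rel \<psi> \<phi>))"
    using sep[OF rD xD x(2)] by blast
  have key: "z \<in> UU \<Longrightarrow> sat D E Ur (e(0 := z)) (rel \<psi> \<phi>) \<longleftrightarrow> sat UU E Ur (env(0 := z)) \<phi>" for z
  proof -
    assume z: "z \<in> UU"
    have "good (e(0 := z))" using good_upd[OF gd] by simp
    moreover have "\<forall>i. (e(0 := z)) (3*i) \<in> UU" using z env unfolding e_def by auto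
    moreover have "(\<lambda>i. (e(0 := z)) (3*i)) = env(0 := z)" unfolding e_def by (auto simp: fun_eq_iff)
    ultimately show ?thesis using sat_rel by metis
  qed
  have "y \<in> UU"
  proof (rule KB[OF y(1,2) _ U_small[OF x(1)]])
    show "\<forall>v\<in>D. E v y \<longrightarrow> v \<in> UU \<and> (\<forall>a. kerset v a \<longrightarrow> kerset x a)"
    proof (intro ballI impI)
      fix v assume v: "v \<in> D" "E v y"
      then have vx: "E v x" using y(3) by blast
      then show "v \<in> UU \<and> (\<forall>a. kerset v a \<longrightarrow> kerset x a)"
        using U_trans[OF x(1) v(1) vx] kerset_mem[OF xD v(1) vx] by blast
    qed
  qed
  moreover have "\<forall>z\<in>UU. E z y \<longleftrightarrow> (E z x \<and> sat UU E Ur (env(0 := z)) \<phi>)"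
  proof
    fix z assume z: "z \<in> UU"
    have "E z y \<longleftrightarrow> (E z x \<and> sat D E Ur (e(0 := z)) (rel \<psi> \<phi>))" using y(3) U_D[OF z] by (rule bspec)
    then show "E z y \<longleftrightarrow> (E z x \<and> sat UU E Ur (env(0 := z)) \<phi>)" using key[OF z] by simp
  qed
  ultimately show "\<exists>y\<in>UU. \<not> Ur y \<and> (\<forall>z\<in>UU. E z y \<longleftrightarrow> (E z x \<and> sat UU E Ur (env(0 := z)) \<phi>))"
    using y(2) by blast
qed

end

definition IsSingF where "IsSingF x a y = Conj (Neg (Urel x)) (All y (Iff (Mem y x) (Equ y a)))"
definition IsDoubF where "IsDoubF x a b y = Conj (Neg (Urel x)) (All y (Iff (Mem y x) (Or (Equ y a) (Equ y b))))"
definition IsPairF where "IsPairF q a b x y = Conj (Neg (Urel q)) (All x (Iff (Mem x q) (Or (IsSingF x a y) (IsDoubF x a b y))))"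
definition InRelF where "InRelF r a b q x y = Ex q (Conj (Mem q r) (IsPairF q a b x y))"
definition SwpF where "SwpF a b c c' = Conj (Imp (Equ a c) (Equ b c')) (Conj (Imp (Conj (Neg (Equ a c)) (Equ a c')) (Equ b c))
   (Imp (Conj (Neg (Equ a c)) (Neg (Equ a c'))) (Equ b a)))"
definition BodyF where "BodyF r a b a' b' q2 x y = Conj (Neg (Urel b)) (Conj
        (All a' (Imp (Mem a' a) (Ex b' (Conj (Mem b' b) (InRelF r a' b' q2 x y)))))
        (All b' (Imp (Mem b' b) (Ex a' (Conj (Mem a' a) (InRelF r a' b' q2 x y))))))"
definition BisimF where "BisimF r c c' q a b a' b' q2 x y =
  Conj (Neg (Urel r)) (All q (Imp (Mem q r) (Ex a (Ex b (Conj (IsPairF q a b x y)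
   (Conj (Imp (Urel a) (SwpF a b c c')) (Imp (Neg (Urel a)) (BodyF r a b a' b' q2 x y))))))))"
definition InTCF where "InTCF a s t u w = All t (Imp (Conj (TransF t u w) (Mem s t)) (Mem a t))"

definition swp :: "'a \<Rightarrow> 'a \<Rightarrow> 'a \<Rightarrow> 'a" where
  "swp c c' a = (if a = c then c' else if a = c' then c else a)"

context M begin

definition inrel where "inrel r a b \<longleftrightarrow> (\<exists>q\<in>D. E q r \<and> ispair q a b)"
definition bisim where "bisim c c' r \<longleftrightarrow> \<not> Ur r \<and> (\<forall>q\<in>D. E q r \<longrightarrow> (\<exists>a\<in>D. \<exists>b\<in>D. ispair q a b \<and>
   (Ur a \<longrightarrow> b = swp c c' a) \<and> (\<not> Ur a \<longrightarrow> \<not> Ur b \<and>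
     (\<forall>a'\<in>D. E a' a \<longrightarrow> (\<exists>b'\<in>D. E b' b \<and> inrel r a' b')) \<and>
     (\<forall>b'\<in>D. E b' b \<longrightarrow> (\<exists>a'\<in>D. E a' a \<and> inrel r a' b')))))"
definition inTC where "inTC a s \<longleftrightarrow> (\<forall>t\<in>D. istr t \<longrightarrow> E s t \<longrightarrow> E a t)"

lemma sat_IsPairF: "distinct [a,b,q,x,y] \<Longrightarrow> sat D E Ur e (IsPairF q a b x y) = ispair (e q) (e a) (e b)"
  unfolding IsPairF_def IsSingF_def IsDoubF_def ispair_def by auto

lemma sat_InRelF: "distinct [r,a,b,q,x,y] \<Longrightarrow> sat D E Ur e (InRelF r a b q x y) = inrel (e r) (e a) (e b)"
  unfolding InRelF_def inrel_def by (simp add: sat_IsPairF)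

lemma sat_SwpF: "sat D E Ur e (SwpF a b c c') = (e b = swp (e c) (e c') (e a))"
  unfolding SwpF_def swp_def by auto

lemma sat_BisimF: assumes "distinct [r,c,c',q,a,b,a',b',q2,x,y]" shows
  "sat D E Ur e (BisimF r c c' q a b a' b' q2 x y) = bisim (e c) (e c') (e r)"
proof -
  have P: "\<And>e. sat D E Ur e (IsPairF q a b x y) = ispair (e q) (e a) (e b)"
    by (rule sat_IsPairF) (use assms in auto)
  have R: "\<And>e. sat D E Ur e (InRelF r a' b' q2 x y) = inrel (e r) (e a') (e b')"
    by (rule sat_InRelF) (use assms in auto)
  show ?thesis using assms unfolding BisimF_def BodyF_def bisim_def by (simp add: P R sat_SwpF eq_commute[of b' a'])
qed

lemma sat_InTCF: assumes "distinct [a,s,t,u,w]" shows "sat D E Ur e (InTCF a s t u w) = inTC (e a) (e s)"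
proof -
  have T: "\<And>e. sat D E Ur e (TransF t u w) = istr (e t)"
    by (rule sat_TransF) (use assms in auto)
  show ?thesis using assms unfolding InTCF_def inTC_def by (simp add: imp_conjL T)
qed

end

definition "F1 = Ex 3 (Ex 4 (Conj (InRelF 1 0 3 5 6 7) (Conj (InRelF 2 0 4 5 6 7) (Neg (Equ 3 4)))))"
definition "F2 = Ex 3 (Ex 4 (Conj (InRelF 1 0 3 5 6 7) (Conj (InRelF 2 3 4 5 6 7) (Neg (Equ 0 4)))))"
definition "F3 = Neg (Ex 3 (Ex 4 (Conj (BisimF 4 1 2 20 21 22 23 24 25 26 27) (InRelF 4 0 3 5 6 7))))"
definition "F7 = Ex 3 (Ex 4 (Conj (BisimF 4 1 2 20 21 22 23 24 25 26 27) (Conj (InRelF 4 0 3 5 6 7) (Neg (Equ 0 3)))))"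
definition "F4 = Ex 4 (Conj (BisimF 4 2 3 20 21 22 23 24 25 26 27) (InRelF 4 0 1 5 6 7))"
definition "F5 = Conj (Neg (Urel 1)) (Ex 4 (Ex 5 (Conj (BisimF 4 2 3 20 21 22 23 24 25 26 27) (Conj (InRelF 4 0 5 6 7 8)
   (All 6 (Iff (Mem 6 1) (Conj (Mem 6 4) (Ex 7 (Ex 8 (Conj (IsPairF 6 7 8 9 10) (InTCF 7 0 11 12 13)))))))))))"
definition "F9 = Ex 2 (InRelF 1 0 2 3 4 5)"
definition "F10 = Ex 2 (Ex 3 (Conj (IsPairF 0 2 3 4 5) (InTCF 2 1 6 7 8)))"

context M begin

lemma sat_F1: "sat D E Ur (e(0 := z)) F1 \<longleftrightarrow> (\<exists>b\<in>D. \<exists>c\<in>D. inrel (e 1) z b \<and> inrel (e 2) z c \<and> b \<noteq> c)"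
  unfolding F1_def by (simp add: sat_InRelF)
lemma sat_F2: "sat D E Ur (e(0 := z)) F2 \<longleftrightarrow> (\<exists>b\<in>D. \<exists>c\<in>D. inrel (e 1) z b \<and> inrel (e 2) b c \<and> z \<noteq> c)"
  unfolding F2_def by (simp add: sat_InRelF)
lemma sat_F3: "sat D E Ur (e(0 := z)) F3 \<longleftrightarrow> \<not> (\<exists>w\<in>D. \<exists>r\<in>D. bisim (e 1) (e 2) r \<and> inrel r z w)"
  unfolding F3_def by (simp add: sat_InRelF sat_BisimF)
lemma sat_F7: "sat D E Ur (e(0 := z)) F7 \<longleftrightarrow> (\<exists>w\<in>D. \<exists>r\<in>D. bisim (e 1) (e 2) r \<and> inrel r z w \<and> z \<noteq> w)"
  unfolding F7_def by (simp add: sat_InRelF sat_BisimF)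
lemma sat_F4: "sat D E Ur (e(0 := u, 1 := v)) F4 \<longleftrightarrow> (\<exists>r\<in>D. bisim (e 2) (e 3) r \<and> inrel r u v)"
  unfolding F4_def by (simp add: sat_InRelF sat_BisimF)
lemma sat_F5: "sat D E Ur (e(0 := s, 1 := r')) F5 \<longleftrightarrow> \<not> Ur r' \<and> (\<exists>r\<in>D. \<exists>w\<in>D. bisim (e 2) (e 3) r \<and> inrel r s w \<and>
   (\<forall>q\<in>D. E q r' \<longleftrightarrow> (E q r \<and> (\<exists>a\<in>D. \<exists>b\<in>D. ispair q a b \<and> inTC a s))))"
  unfolding F5_def by (simp add: sat_InRelF sat_BisimF sat_IsPairF sat_InTCF)
lemma sat_F9: "sat D E Ur (e(0 := z)) F9 \<longleftrightarrow> (\<exists>b\<in>D. inrel (e 1) z b)"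
  unfolding F9_def by (simp add: sat_InRelF)
lemma sat_F10: "sat D E Ur (e(0 := z)) F10 \<longleftrightarrow> (\<exists>a\<in>D. \<exists>b\<in>D. ispair z a b \<and> inTC a (e 1))"
  unfolding F10_def by (simp add: sat_IsPairF sat_InTCF)

end

context M begin

lemma min_elem: assumes "range env \<subseteq> D" "S \<in> D" "\<not> Ur S" "z0 \<in> D" "E z0 S" "sat D E Ur (env(0:=z0)) \<phi>"
  shows "\<exists>z\<in>D. E z S \<and> sat D E Ur (env(0:=z)) \<phi> \<and> (\<forall>y\<in>D. E y z \<longrightarrow> E y S \<longrightarrow> \<not> sat D E Ur (env(0:=y)) \<phi>)"
proof -
  obtain B where B: "B \<in> D" "\<not> Ur B" "\<forall>z\<in>D. E z B \<longleftrightarrow> (E z S \<and> sat D E Ur (env(0 := z)) \<phi>)"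
    using sep[OF assms(1-3)] by blast
  have "E z0 B" using B(3) assms(4-6) by blast
  then obtain z where z: "z \<in> D" "E z B" "\<not> (\<exists>y\<in>D. E y z \<and> E y B)" using found[OF B(1) assms(4)] by blast
  have "E z S \<and> sat D E Ur (env(0:=z)) \<phi>" using B(3) z(1,2) by blast
  moreover have "\<forall>y\<in>D. E y z \<longrightarrow> E y S \<longrightarrow> \<not> sat D E Ur (env(0:=y)) \<phi>"
  proof (intro ballI impI notI)
    fix y assume "y \<in> D" "E y z" "E y S" "sat D E Ur (env(0:=y)) \<phi>"
    then have "E y B" using B(3) by blast
    then show False using z(3) \<open>y \<in> D\<close> \<open>E y z\<close> by blast
  qed
  ultimately show ?thesis using z(1) by blast
qed

lemma dom_set: assumes "r \<in> D" "\<not> Ur r" shows "\<exists>Dm\<in>D. \<not> Ur Dm \<and> (\<forall>a\<in>D. \<forall>b\<in>D. inrel r a b \<longrightarrow> E a Dm)"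
proof -
  obtain U1 where U1: "U1 \<in> D" "\<not> Ur U1" "\<forall>z\<in>D. E z U1 \<longleftrightarrow> (\<exists>y\<in>D. E y r \<and> E z y)" using union[OF assms] by blast
  obtain U2 where U2: "U2 \<in> D" "\<not> Ur U2" "\<forall>z\<in>D. E z U2 \<longleftrightarrow> (\<exists>y\<in>D. E y U1 \<and> E z y)" using union[OF U1(1,2)] by blast
  have "\<forall>a\<in>D. \<forall>b\<in>D. inrel r a b \<longrightarrow> E a U2"
  proof (intro ballI impI)
    fix a b assume ab: "a \<in> D" "b \<in> D" "inrel r a b"
    then obtain q where q: "q \<in> D" "E q r" "ispair q a b" unfolding inrel_def by blast
    obtain s where s: "s \<in> D" "\<not> Ur s" "\<forall>z\<in>D. E z s \<longleftrightarrow> z = a" using sing_ex[OF ab(1)] by blast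
    have "E s q" using ispairD[OF q(3) s(1)] s by blast
    then have "E s U1" using U1(3) s(1) q(1,2) by blast
    moreover have "E a s" using s(3) ab(1) by blast
    ultimately show "E a U2" using U2(3) ab(1) s(1) by blast
  qed
  then show ?thesis using U2(1,2) by blast
qed

end


locale MS = M +
  fixes c c' :: 'a
  assumes cD: "c \<in> D" "c' \<in> D" and cU: "Ur c" "Ur c'"
begin

abbreviation "B r \<equiv> bisim c c' r"

lemma swp_D: "a \<in> D \<Longrightarrow> swp c c' a \<in> D" unfolding swp_def using cD by auto
lemma swp_Ur: "Ur a \<Longrightarrow> Ur (swp c c' a)" unfolding swp_def using cU by auto
lemma swp_swp: "swp c c' (swp c c' a) = a" unfolding swp_def by auto

lemma inrelD: "inrel r a b \<Longrightarrow> \<exists>q\<in>D. E q r \<and> ispair q a b" unfolding inrel_def by blast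

lemma bisim_at: assumes "B r" "inrel r a b" "a \<in> D" "b \<in> D"
  shows "(Ur a \<longrightarrow> b = swp c c' a) \<and> (\<not> Ur a \<longrightarrow> \<not> Ur b \<and>
     (\<forall>a'\<in>D. E a' a \<longrightarrow> (\<exists>b'\<in>D. E b' b \<and> inrel r a' b')) \<and>
     (\<forall>b'\<in>D. E b' b \<longrightarrow> (\<exists>a'\<in>D. E a' a \<and> inrel r a' b')))"
proof -
  obtain q where q: "q \<in> D" "E q r" "ispair q a b" using inrelD[OF assms(2)] by blast
  obtain a1 b1 where ab1: "a1 \<in> D" "b1 \<in> D" "ispair q a1 b1" "(Ur a1 \<longrightarrow> b1 = swp c c' a1) \<and> (\<not> Ur a1 \<longrightarrow> \<not> Ur b1 \<and>
     (\<forall>a'\<in>D. E a' a1 \<longrightarrow> (\<exists>b'\<in>D. E b' b1 \<and> inrel r a' b')) \<and>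
     (\<forall>b'\<in>D. E b' b1 \<longrightarrow> (\<exists>a'\<in>D. E a' a1 \<and> inrel r a' b')))"
    using assms(1) q(1,2) unfolding bisim_def by blast
  have "a1 = a \<and> b1 = b" using pair_inj[OF q(1) ab1(1,2) assms(3,4) ab1(3) q(3)] .
  then show ?thesis using ab1(4) by blast
qed

lemma bisim_func: assumes r: "r1 \<in> D" "r2 \<in> D" "B r1" "B r2"
  and ab: "a \<in> D" "b \<in> D" "b' \<in> D" "inrel r1 a b" "inrel r2 a b'" shows "b = b'"
proof (rule ccontr)
  assume nb: "b \<noteq> b'"
  have nu1: "\<not> Ur r1" using r(3) unfolding bisim_def by blast
  obtain Dm where Dm: "Dm \<in> D" "\<not> Ur Dm" "\<forall>a\<in>D. \<forall>b\<in>D. inrel r1 a b \<longrightarrow> E a Dm" using dom_set[OF r(1) nu1] by blast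
  define env where "env = (\<lambda>_::nat. r1)(2 := r2)"
  have rg: "range env \<subseteq> D" unfolding env_def using r by auto
  have e12: "env 1 = r1" "env 2 = r2" unfolding env_def by auto
  have bad: "\<And>z. sat D E Ur (env(0 := z)) F1 \<longleftrightarrow> (\<exists>b\<in>D. \<exists>c\<in>D. inrel r1 z b \<and> inrel r2 z c \<and> b \<noteq> c)"
    using sat_F1 e12 by simp
  have "E a Dm" using Dm(3) ab by blast
  moreover have "sat D E Ur (env(0 := a)) F1" using bad ab nb by blast
  ultimately obtain z where z: "z \<in> D" "E z Dm" "sat D E Ur (env(0:=z)) F1"
     "\<forall>y\<in>D. E y z \<longrightarrow> E y Dm \<longrightarrow> \<not> sat D E Ur (env(0:=y)) F1"
    using min_elem[OF rg Dm(1,2) ab(1)] by blast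
  obtain b0 b0' where b0: "b0 \<in> D" "b0' \<in> D" "inrel r1 z b0" "inrel r2 z b0'" "b0 \<noteq> b0'" using bad z(3) by blast
  have nb': "\<And>y u u'. y \<in> D \<Longrightarrow> E y z \<Longrightarrow> u \<in> D \<Longrightarrow> u' \<in> D \<Longrightarrow> inrel r1 y u \<Longrightarrow> inrel r2 y u' \<Longrightarrow> u = u'"
  proof -
    fix y u u' assume h: "y \<in> D" "E y z" "u \<in> D" "u' \<in> D" "inrel r1 y u" "inrel r2 y u'"
    have "E y Dm" using Dm(3) h by blast
    then have "\<not> sat D E Ur (env(0:=y)) F1" using z(4) h by blast
    then show "u = u'" using bad h by blast
  qed
  have at1: "(Ur z \<longrightarrow> b0 = swp c c' z) \<and> (\<not> Ur z \<longrightarrow> \<not> Ur b0 \<and>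
     (\<forall>a'\<in>D. E a' z \<longrightarrow> (\<exists>b'\<in>D. E b' b0 \<and> inrel r1 a' b')) \<and>
     (\<forall>b'\<in>D. E b' b0 \<longrightarrow> (\<exists>a'\<in>D. E a' z \<and> inrel r1 a' b')))" using bisim_at[OF r(3) b0(3) z(1) b0(1)] .
  have at2: "(Ur z \<longrightarrow> b0' = swp c c' z) \<and> (\<not> Ur z \<longrightarrow> \<not> Ur b0' \<and>
     (\<forall>a'\<in>D. E a' z \<longrightarrow> (\<exists>b'\<in>D. E b' b0' \<and> inrel r2 a' b')) \<and>
     (\<forall>b'\<in>D. E b' b0' \<longrightarrow> (\<exists>a'\<in>D. E a' z \<and> inrel r2 a' b')))" using bisim_at[OF r(4) b0(4) z(1) b0(2)] .
  show False
  proof (cases "Ur z")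
    case True then show False using at1 at2 b0(5) by simp
  next
    case False
    have "b0 = b0'"
    proof (rule ext[OF b0(1,2)])
      show "\<not> Ur b0" "\<not> Ur b0'" using at1 at2 False by blast+
      fix w assume w: "w \<in> D"
      show "E w b0 \<longleftrightarrow> E w b0'"
      proof
        assume "E w b0"
        then obtain y where y: "y \<in> D" "E y z" "inrel r1 y w" using at1 False w by blast
        then obtain w' where w': "w' \<in> D" "E w' b0'" "inrel r2 y w'" using at2 False by blast
        have "w = w'" using nb'[OF y(1,2) w w'(1) y(3) w'(3)] .
        then show "E w b0'" using w' by simp
      next
        assume "E w b0'"
        then obtain y where y: "y \<in> D" "E y z" "inrel r2 y w" using at2 False w by blast
        then obtain w' where w': "w' \<in> D" "E w' b0" "inrel r1 y w'" using at1 False by blast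
        have "w' = w" using nb'[OF y(1,2) w'(1) w w'(3) y(3)] .
        then show "E w b0" using w' by simp
      qed
    qed
    then show False using b0(5) by blast
  qed
qed

lemma bisim_comp: assumes r: "r1 \<in> D" "r2 \<in> D" "B r1" "B r2"
  and ab: "a \<in> D" "b \<in> D" "d \<in> D" "inrel r1 a b" "inrel r2 b d" shows "a = d"
proof (rule ccontr)
  assume nb: "a \<noteq> d"
  have nu1: "\<not> Ur r1" using r(3) unfolding bisim_def by blast
  obtain Dm where Dm: "Dm \<in> D" "\<not> Ur Dm" "\<forall>a\<in>D. \<forall>b\<in>D. inrel r1 a b \<longrightarrow> E a Dm" using dom_set[OF r(1) nu1] by blast
  define env where "env = (\<lambda>_::nat. r1)(2 := r2)"
  have rg: "range env \<subseteq> D" unfolding env_def using r by auto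
  have e12: "env 1 = r1" "env 2 = r2" unfolding env_def by auto
  have bad: "\<And>z. sat D E Ur (env(0 := z)) F2 \<longleftrightarrow> (\<exists>b\<in>D. \<exists>c\<in>D. inrel r1 z b \<and> inrel r2 b c \<and> z \<noteq> c)"
    using sat_F2 e12 by simp
  have "E a Dm" using Dm(3) ab by blast
  moreover have "sat D E Ur (env(0 := a)) F2" using bad ab nb by blast
  ultimately obtain z where z: "z \<in> D" "E z Dm" "sat D E Ur (env(0:=z)) F2"
     "\<forall>y\<in>D. E y z \<longrightarrow> E y Dm \<longrightarrow> \<not> sat D E Ur (env(0:=y)) F2"
    using min_elem[OF rg Dm(1,2) ab(1)] by blast
  obtain b0 d0 where b0: "b0 \<in> D" "d0 \<in> D" "inrel r1 z b0" "inrel r2 b0 d0" "z \<noteq> d0" using bad z(3) by blast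
  have nb': "\<And>y u u'. y \<in> D \<Longrightarrow> E y z \<Longrightarrow> u \<in> D \<Longrightarrow> u' \<in> D \<Longrightarrow> inrel r1 y u \<Longrightarrow> inrel r2 u u' \<Longrightarrow> y = u'"
  proof -
    fix y u u' assume h: "y \<in> D" "E y z" "u \<in> D" "u' \<in> D" "inrel r1 y u" "inrel r2 u u'"
    have "E y Dm" using Dm(3) h by blast
    then have "\<not> sat D E Ur (env(0:=y)) F2" using z(4) h by blast
    then show "y = u'" using bad h by blast
  qed
  have at1: "(Ur z \<longrightarrow> b0 = swp c c' z) \<and> (\<not> Ur z \<longrightarrow> \<not> Ur b0 \<and>
     (\<forall>a'\<in>D. E a' z \<longrightarrow> (\<exists>b'\<in>D. E b' b0 \<and> inrel r1 a' b')) \<and>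
     (\<forall>b'\<in>D. E b' b0 \<longrightarrow> (\<exists>a'\<in>D. E a' z \<and> inrel r1 a' b')))" using bisim_at[OF r(3) b0(3) z(1) b0(1)] .
  have at2: "(Ur b0 \<longrightarrow> d0 = swp c c' b0) \<and> (\<not> Ur b0 \<longrightarrow> \<not> Ur d0 \<and>
     (\<forall>a'\<in>D. E a' b0 \<longrightarrow> (\<exists>b'\<in>D. E b' d0 \<and> inrel r2 a' b')) \<and>
     (\<forall>b'\<in>D. E b' d0 \<longrightarrow> (\<exists>a'\<in>D. E a' b0 \<and> inrel r2 a' b')))" using bisim_at[OF r(4) b0(4) b0(1) b0(2)] .
  show False
  proof (cases "Ur z")
    case True
    then have "b0 = swp c c' z" "Ur b0" using at1 swp_Ur by auto
    then have "d0 = z" using at2 swp_swp by simp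
    then show False using b0(5) by simp
  next
    case False
    have nb0: "\<not> Ur b0" using at1 False by blast
    have "z = d0"
    proof (rule ext[OF z(1) b0(2)])
      show "\<not> Ur z" by fact
      show "\<not> Ur d0" using at2 nb0 by blast
      fix w assume w: "w \<in> D"
      show "E w z \<longleftrightarrow> E w d0"
      proof
        assume wz: "E w z"
        then obtain u where u: "u \<in> D" "E u b0" "inrel r1 w u" using at1 False w by blast
        then obtain u' where u': "u' \<in> D" "E u' d0" "inrel r2 u u'" using at2 nb0 by blast
        have "w = u'" using nb'[OF w wz u(1) u'(1) u(3) u'(3)] .
        then show "E w d0" using u' by simp
      next
        assume "E w d0"
        then obtain u where u: "u \<in> D" "E u b0" "inrel r2 u w" using at2 nb0 w by blast
        then obtain y where y: "y \<in> D" "E y z" "inrel r1 y u" using at1 False by blast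
        have "y = w" using nb'[OF y(1,2) u(1) w y(3) u(3)] .
        then show "E w z" using y by simp
      qed
    qed
    then show False using b0(5) by blast
  qed
qed

end

context MS begin

lemma inTC_refl: "inTC u u" unfolding inTC_def by blast
lemma inTC_step: "inTC a u \<Longrightarrow> a \<in> D \<Longrightarrow> a' \<in> D \<Longrightarrow> E a' a \<Longrightarrow> inTC a' u"
  unfolding inTC_def using transD by blast

lemma inrel_mono: "inrel r a b \<Longrightarrow> (\<forall>q\<in>D. E q r \<longrightarrow> E q r2) \<Longrightarrow> inrel r2 a b"
  unfolding inrel_def by blast

lemma bisim_D: "B r \<Longrightarrow> \<not> Ur r" unfolding bisim_def by blast

lemma restrict_ex: assumes "r \<in> D" "B r" "u \<in> D"
  shows "\<exists>r'\<in>D. \<not> Ur r' \<and> (\<forall>q\<in>D. E q r' \<longleftrightarrow> (E q r \<and> (\<exists>a\<in>D. \<exists>b\<in>D. ispair q a b \<and> inTC a u)))"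
proof -
  have rg: "range (\<lambda>_::nat. u) \<subseteq> D" using assms by auto
  obtain r' where r': "r' \<in> D" "\<not> Ur r'" "\<forall>q\<in>D. E q r' \<longleftrightarrow> (E q r \<and> sat D E Ur ((\<lambda>_. u)(0 := q)) F10)"
    using sep[OF rg assms(1) bisim_D[OF assms(2)]] by blast
  have "\<And>q. sat D E Ur ((\<lambda>_. u)(0 := q)) F10 \<longleftrightarrow> (\<exists>a\<in>D. \<exists>b\<in>D. ispair q a b \<and> inTC a u)"
    using sat_F10 by simp
  then show ?thesis using r' by (intro bexI[of _ r']) auto
qed

lemma restrict_bisim: assumes r: "r \<in> D" "B r" and r': "r' \<in> D" "\<not> Ur r'"
  "\<forall>q\<in>D. E q r' \<longleftrightarrow> (E q r \<and> (\<exists>a\<in>D. \<exists>b\<in>D. ispair q a b \<and> inTC a u))"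
  shows "B r'"
  unfolding bisim_def
proof (intro conjI ballI impI)
  show "\<not> Ur r'" by fact
  fix q assume q: "q \<in> D" "E q r'"
  then have qr: "E q r" and "\<exists>a\<in>D. \<exists>b\<in>D. ispair q a b \<and> inTC a u" using r'(3) by blast+
  then obtain a b where ab: "a \<in> D" "b \<in> D" "ispair q a b" "inTC a u" by blast
  have ir: "inrel r a b" unfolding inrel_def using q qr ab by blast
  have at: "(Ur a \<longrightarrow> b = swp c c' a) \<and> (\<not> Ur a \<longrightarrow> \<not> Ur b \<and>
     (\<forall>a'\<in>D. E a' a \<longrightarrow> (\<exists>b'\<in>D. E b' b \<and> inrel r a' b')) \<and>
     (\<forall>b'\<in>D. E b' b \<longrightarrow> (\<exists>a'\<in>D. E a' a \<and> inrel r a' b')))" using bisim_at[OF r(2) ir ab(1,2)] .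
  have lift: "inrel r' a' b'" if h: "a' \<in> D" "b' \<in> D" "E a' a" "inrel r a' b'" for a' b'
  proof -
    obtain q' where q': "q' \<in> D" "E q' r" "ispair q' a' b'" using inrelD[OF h(4)] by blast
    have "inTC a' u" using inTC_step[OF ab(4) ab(1) h(1) h(3)] .
    then have "E q' r'" using r'(3) q' h by blast
    then show ?thesis unfolding inrel_def using q' by blast
  qed
  have "(\<not> Ur a \<longrightarrow> \<not> Ur b \<and>
     (\<forall>a'\<in>D. E a' a \<longrightarrow> (\<exists>b'\<in>D. E b' b \<and> inrel r' a' b')) \<and>
     (\<forall>b'\<in>D. E b' b \<longrightarrow> (\<exists>a'\<in>D. E a' a \<and> inrel r' a' b')))"
  proof
    assume nu: "\<not> Ur a"
    have "\<forall>a'\<in>D. E a' a \<longrightarrow> (\<exists>b'\<in>D. E b' b \<and> inrel r' a' b')"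
    proof (intro ballI impI)
      fix a' assume "a' \<in> D" "E a' a"
      then obtain b' where "b' \<in> D" "E b' b" "inrel r a' b'" using at nu by blast
      then show "\<exists>b'\<in>D. E b' b \<and> inrel r' a' b'" using lift \<open>a' \<in> D\<close> \<open>E a' a\<close> by blast
    qed
    moreover have "\<forall>b'\<in>D. E b' b \<longrightarrow> (\<exists>a'\<in>D. E a' a \<and> inrel r' a' b')"
    proof (intro ballI impI)
      fix b' assume "b' \<in> D" "E b' b"
      then obtain a' where "a' \<in> D" "E a' a" "inrel r a' b'" using at nu by blast
      then show "\<exists>a'\<in>D. E a' a \<and> inrel r' a' b'" using lift \<open>b' \<in> D\<close> by blast
    qed
    ultimately show "\<not> Ur b \<and>
     (\<forall>a'\<in>D. E a' a \<longrightarrow> (\<exists>b'\<in>D. E b' b \<and> inrel r' a' b')) \<and>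
     (\<forall>b'\<in>D. E b' b \<longrightarrow> (\<exists>a'\<in>D. E a' a \<and> inrel r' a' b'))" using at nu by blast
  qed
  then show "\<exists>a\<in>D. \<exists>b\<in>D. ispair q a b \<and> (Ur a \<longrightarrow> b = swp c c' a) \<and> (\<not> Ur a \<longrightarrow> \<not> Ur b \<and>
     (\<forall>a'\<in>D. E a' a \<longrightarrow> (\<exists>b'\<in>D. E b' b \<and> inrel r' a' b')) \<and>
     (\<forall>b'\<in>D. E b' b \<longrightarrow> (\<exists>a'\<in>D. E a' a \<and> inrel r' a' b')))"
    using ab at by blast
qed

lemma dom_closed: assumes u: "u \<in> D" "haveTC u" and r: "r \<in> D" "B r" "w \<in> D" "inrel r u w"
  and a: "a \<in> D" "inTC a u" shows "\<exists>b\<in>D. inrel r a b"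
proof -
  obtain tu where tu: "tu \<in> D" "is_TC_singleton D E Ur u tu" using TC_ex[OF u] by blast
  have tr: "istr tu" "E u tu" using tu(2) unfolding is_TC_singleton_def by blast+
  have nt: "\<not> Ur tu" using tr(1) unfolding is_transitive_def by blast
  have rg: "range (\<lambda>_::nat. r) \<subseteq> D" using r by auto
  obtain D0 where D0: "D0 \<in> D" "\<not> Ur D0" "\<forall>q\<in>D. E q D0 \<longleftrightarrow> (E q tu \<and> sat D E Ur ((\<lambda>_. r)(0 := q)) F9)"
    using sep[OF rg tu(1) nt] by blast
  have D0': "\<forall>q\<in>D. E q D0 \<longleftrightarrow> (E q tu \<and> (\<exists>b\<in>D. inrel r q b))" using D0(3) sat_F9 by simp
  have "istr D0" unfolding is_transitive_def
  proof (intro conjI ballI impI)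
    show "\<not> Ur D0" by fact
    fix y x assume h: "y \<in> D" "E y D0" "\<not> Ur y" "x \<in> D" "E x y"
    then obtain b where b: "b \<in> D" "inrel r y b" "E y tu" using D0' by blast
    have "\<exists>b'\<in>D. E b' b \<and> inrel r x b'" using bisim_at[OF r(2) b(2) h(1) b(1)] h by blast
    then have "\<exists>b\<in>D. inrel r x b" by blast
    moreover have "E x tu" using transD[OF tr(1) h(1) h(4) b(3) h(5)] .
    ultimately show "E x D0" using D0' h(4) by blast
  qed
  moreover have "E u D0" using D0' u(1) tr(2) r(3,4) by blast
  ultimately have "E a D0" using a D0(1) unfolding inTC_def by blast
  then show ?thesis using D0' a(1) by blast
qed

end

context MS begin

lemma restrict_uniq: assumes u: "u \<in> D" "haveTC u"
  and r1: "r1 \<in> D" "B r1" "w1 \<in> D" "inrel r1 u w1"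
  and r2: "r2 \<in> D" "B r2" "w2 \<in> D" "inrel r2 u w2"
  and s1: "s1 \<in> D" "\<not> Ur s1" "\<forall>q\<in>D. E q s1 \<longleftrightarrow> (E q r1 \<and> (\<exists>a\<in>D. \<exists>b\<in>D. ispair q a b \<and> inTC a u))"
  and s2: "s2 \<in> D" "\<not> Ur s2" "\<forall>q\<in>D. E q s2 \<longleftrightarrow> (E q r2 \<and> (\<exists>a\<in>D. \<exists>b\<in>D. ispair q a b \<and> inTC a u))"
  shows "s1 = s2"
proof -
  have one: "E q s'" if
    ra: "ra \<in> D" "B ra" "wa \<in> D" "inrel ra u wa" and rb: "rb \<in> D" "B rb" "wb \<in> D" "inrel rb u wb"
    and sa: "\<forall>q\<in>D. E q s \<longleftrightarrow> (E q ra \<and> (\<exists>a\<in>D. \<exists>b\<in>D. ispair q a b \<and> inTC a u))"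
    and sb: "\<forall>q\<in>D. E q s' \<longleftrightarrow> (E q rb \<and> (\<exists>a\<in>D. \<exists>b\<in>D. ispair q a b \<and> inTC a u))"
    and q: "q \<in> D" "E q s" for ra wa rb wb s s' q
  proof -
    have qa: "E q ra" using sa q by blast
    obtain a b where ab: "a \<in> D" "b \<in> D" "ispair q a b" "inTC a u" using sa q by blast
    obtain b' where b': "b' \<in> D" "inrel rb a b'" using dom_closed[OF u rb ab(1,4)] by blast
    have "inrel ra a b" unfolding inrel_def using q(1) qa ab(3) by blast
    then have "b = b'" using bisim_func[OF ra(1) rb(1) ra(2) rb(2) ab(1,2) b'(1) _ b'(2)] by blast
    then obtain q' where q': "q' \<in> D" "E q' rb" "ispair q' a b" using inrelD[OF b'(2)] by blast
    have "q' = q" using pair_uniq[OF q'(1) q(1) q'(3) ab(3)] .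
    then show "E q s'" using sb q' ab by blast
  qed
  show ?thesis
  proof (rule ext[OF s1(1) s2(1) s1(2) s2(2)])
    fix q assume q: "q \<in> D"
    show "E q s1 \<longleftrightarrow> E q s2"
      using one[OF r1 r2 s1(3) s2(3) q] one[OF r2 r1 s2(3) s1(3) q] by blast
  qed
qed

lemma bisim_sing: assumes "v \<in> D" "Ur v" shows "\<exists>r\<in>D. B r \<and> inrel r v (swp c c' v)"
proof -
  have sD: "swp c c' v \<in> D" using swp_D[OF assms(1)] .
  obtain q where q: "q \<in> D" "ispair q v (swp c c' v)" using pair_ex[OF assms(1) sD] by blast
  obtain r where r: "r \<in> D" "\<not> Ur r" "\<forall>z\<in>D. E z r \<longleftrightarrow> z = q" using sing_ex[OF q(1)] by blast
  have "B r" unfolding bisim_def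
  proof (intro conjI ballI impI)
    show "\<not> Ur r" by fact
    fix q' assume "q' \<in> D" "E q' r"
    then have "q' = q" using r(3) by blast
    then show "\<exists>a\<in>D. \<exists>b\<in>D. ispair q' a b \<and> (Ur a \<longrightarrow> b = swp c c' a) \<and> (\<not> Ur a \<longrightarrow> \<not> Ur b \<and>
     (\<forall>a'\<in>D. E a' a \<longrightarrow> (\<exists>b'\<in>D. E b' b \<and> inrel r a' b')) \<and>
     (\<forall>b'\<in>D. E b' b \<longrightarrow> (\<exists>a'\<in>D. E a' a \<and> inrel r a' b')))"
      using q assms sD by blast
  qed
  moreover have "inrel r v (swp c c' v)" unfolding inrel_def using r(3) q by blast
  ultimately show ?thesis using r(1) by blast
qed

lemma bisim_step: assumes v: "v \<in> D" "\<not> Ur v" "haveTC v"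
  and IH: "\<forall>y\<in>D. E y v \<longrightarrow> (\<exists>w\<in>D. \<exists>r\<in>D. B r \<and> inrel r y w)"
  shows "\<exists>w\<in>D. \<exists>r\<in>D. B r \<and> inrel r v w"
proof -
  define env where "env = (\<lambda>_::nat. c)(3 := c')"
  have rg: "range env \<subseteq> D" unfolding env_def using cD by auto
  have e23: "env 2 = c" "env 3 = c'" unfolding env_def by auto
  have F4e: "\<And>u w. sat D E Ur (env(0 := u, 1 := w)) F4 \<longleftrightarrow> (\<exists>r\<in>D. B r \<and> inrel r u w)"
    using sat_F4 e23 by simp
  have F5e: "\<And>u s. sat D E Ur (env(0 := u, 1 := s)) F5 \<longleftrightarrow> \<not> Ur s \<and> (\<exists>r\<in>D. \<exists>w\<in>D. B r \<and> inrel r u w \<and>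
   (\<forall>q\<in>D. E q s \<longleftrightarrow> (E q r \<and> (\<exists>a\<in>D. \<exists>b\<in>D. ispair q a b \<and> inTC a u))))"
    using sat_F5 e23 by simp
  have hu: "haveTC u" if "u \<in> D" "E u v" for u using haveTC_mem[OF v(1) that v(3)] .
  have "\<forall>u\<in>D. E u v \<longrightarrow> (\<exists>w\<in>D. sat D E Ur (env(0 := u, 1 := w)) F4 \<and>
          (\<forall>w'\<in>D. sat D E Ur (env(0 := u, 1 := w')) F4 \<longrightarrow> w' = w))"
  proof (intro ballI impI)
    fix u assume u: "u \<in> D" "E u v"
    obtain w r where wr: "w \<in> D" "r \<in> D" "B r" "inrel r u w" using IH u by blast
    have "\<forall>w'\<in>D. (\<exists>r\<in>D. B r \<and> inrel r u w') \<longrightarrow> w' = w"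
      using bisim_func[OF _ wr(2) _ wr(3) u(1) _ wr(1) _ wr(4)] by blast
    then show "\<exists>w\<in>D. sat D E Ur (env(0 := u, 1 := w)) F4 \<and>
          (\<forall>w'\<in>D. sat D E Ur (env(0 := u, 1 := w')) F4 \<longrightarrow> w' = w)" using F4e wr by blast
  qed
  from repl[OF rg v(1,2) this] obtain W where W: "W \<in> D" "\<not> Ur W"
    "\<forall>w\<in>D. E w W \<longleftrightarrow> (\<exists>u\<in>D. E u v \<and> sat D E Ur (env(0 := u, 1 := w)) F4)" by blast
  have W': "\<forall>w\<in>D. E w W \<longleftrightarrow> (\<exists>u\<in>D. E u v \<and> (\<exists>r\<in>D. B r \<and> inrel r u w))" using W(3) F4e by simp
  have "\<forall>u\<in>D. E u v \<longrightarrow> (\<exists>s\<in>D. sat D E Ur (env(0 := u, 1 := s)) F5 \<and>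
          (\<forall>s'\<in>D. sat D E Ur (env(0 := u, 1 := s')) F5 \<longrightarrow> s' = s))"
  proof (intro ballI impI)
    fix u assume u: "u \<in> D" "E u v"
    obtain w r where wr: "w \<in> D" "r \<in> D" "B r" "inrel r u w" using IH u by blast
    obtain s where s: "s \<in> D" "\<not> Ur s" "\<forall>q\<in>D. E q s \<longleftrightarrow> (E q r \<and> (\<exists>a\<in>D. \<exists>b\<in>D. ispair q a b \<and> inTC a u))"
      using restrict_ex[OF wr(2,3) u(1)] by blast
    have "sat D E Ur (env(0 := u, 1 := s)) F5" using F5e s wr by blast
    moreover have "\<forall>s'\<in>D. sat D E Ur (env(0 := u, 1 := s')) F5 \<longrightarrow> s' = s"
    proof (intro ballI impI)
      fix s' assume s': "s' \<in> D" "sat D E Ur (env(0 := u, 1 := s')) F5"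
      then obtain r' w' where r': "r' \<in> D" "w' \<in> D" "B r'" "inrel r' u w'" "\<not> Ur s'"
        "\<forall>q\<in>D. E q s' \<longleftrightarrow> (E q r' \<and> (\<exists>a\<in>D. \<exists>b\<in>D. ispair q a b \<and> inTC a u))"
        using F5e by blast
      show "s' = s" using restrict_uniq[OF u(1) hu[OF u] r'(1,3,2,4) wr(2,3,1,4) s'(1) r'(5,6) s] .
    qed
    ultimately show "\<exists>s\<in>D. sat D E Ur (env(0 := u, 1 := s)) F5 \<and>
          (\<forall>s'\<in>D. sat D E Ur (env(0 := u, 1 := s')) F5 \<longrightarrow> s' = s)" using s(1) by blast
  qed
  note ex5 = this
  from repl[OF rg v(1,2) this] obtain R where R: "R \<in> D" "\<not> Ur R"
    "\<forall>s\<in>D. E s R \<longleftrightarrow> (\<exists>u\<in>D. E u v \<and> sat D E Ur (env(0 := u, 1 := s)) F5)" by blast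
  obtain Ru where Ru: "Ru \<in> D" "\<not> Ur Ru" "\<forall>z\<in>D. E z Ru \<longleftrightarrow> (\<exists>y\<in>D. E y R \<and> E z y)"
    using union[OF R(1,2)] by blast
  obtain qv where qv: "qv \<in> D" "ispair qv v W" using pair_ex[OF v(1) W(1)] by blast
  obtain sv where sv: "sv \<in> D" "\<not> Ur sv" "\<forall>z\<in>D. E z sv \<longleftrightarrow> z = qv" using sing_ex[OF qv(1)] by blast
  obtain rr where rr: "rr \<in> D" "\<not> Ur rr" "\<forall>z\<in>D. E z rr \<longleftrightarrow> (E z Ru \<or> E z sv)"
    using bunion[OF Ru(1) sv(1) Ru(2) sv(2)] by blast
  have inR: "\<And>s q. s \<in> D \<Longrightarrow> E s R \<Longrightarrow> q \<in> D \<Longrightarrow> E q s \<Longrightarrow> E q rr"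
  proof -
    fix s q assume "s \<in> D" "E s R" "q \<in> D" "E q s"
    then have "E q Ru" using Ru(3) by blast
    then show "E q rr" using rr(3) \<open>q \<in> D\<close> by blast
  qed
  have rel_u: "\<exists>r0\<in>D. B r0 \<and> inrel r0 u w \<and> inrel rr u w" if u: "u \<in> D" "E u v" "w \<in> D" "\<exists>r\<in>D. B r \<and> inrel r u w" for u w
  proof -
    obtain s where s: "s \<in> D" "sat D E Ur (env(0 := u, 1 := s)) F5" using ex5 u(1,2) by blast
    have sR: "E s R" using R(3) s u(1,2) by blast
    obtain r' w' where r': "r' \<in> D" "w' \<in> D" "B r'" "inrel r' u w'"
        "\<forall>q\<in>D. E q s \<longleftrightarrow> (E q r' \<and> (\<exists>a\<in>D. \<exists>b\<in>D. ispair q a b \<and> inTC a u))"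
      using F5e s(2) by blast
    obtain r0 where r0: "r0 \<in> D" "B r0" "inrel r0 u w" using u(4) by blast
    have "w' = w" using bisim_func[OF r'(1) r0(1) r'(3) r0(2) u(1) r'(2) u(3) r'(4) r0(3)] .
    then obtain q where q: "q \<in> D" "E q r'" "ispair q u w" using inrelD[OF r'(4)] by blast
    have "E q s" using r'(5) q u(1,3) inTC_refl by blast
    then have "E q rr" using inR[OF s(1) sR q(1)] by blast
    then have "inrel rr u w" unfolding inrel_def using q by blast
    then show ?thesis using r0 by blast
  qed
  have "B rr" unfolding bisim_def
  proof (intro conjI ballI impI)
    show "\<not> Ur rr" by fact
    fix q assume q: "q \<in> D" "E q rr"
    then have "E q Ru \<or> E q sv" using rr(3) by blast
    then show "\<exists>a\<in>D. \<exists>b\<in>D. ispair q a b \<and> (Ur a \<longrightarrow> b = swp c c' a) \<and> (\<not> Ur a \<longrightarrow> \<not> Ur b \<and>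
     (\<forall>a'\<in>D. E a' a \<longrightarrow> (\<exists>b'\<in>D. E b' b \<and> inrel rr a' b')) \<and>
     (\<forall>b'\<in>D. E b' b \<longrightarrow> (\<exists>a'\<in>D. E a' a \<and> inrel rr a' b')))"
    proof
      assume "E q Ru"
      then obtain s where s: "s \<in> D" "E s R" "E q s" using Ru(3) q(1) by blast
      then obtain u where u: "u \<in> D" "E u v" "sat D E Ur (env(0 := u, 1 := s)) F5" using R(3) by blast
      obtain r' w' where r': "r' \<in> D" "w' \<in> D" "B r'" "inrel r' u w'" "\<not> Ur s"
        "\<forall>q\<in>D. E q s \<longleftrightarrow> (E q r' \<and> (\<exists>a\<in>D. \<exists>b\<in>D. ispair q a b \<and> inTC a u))"
        using F5e u(3) by blast
      have Bs: "B s" using restrict_bisim[OF r'(1,3) s(1) r'(5,6)] .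
      have sub: "\<forall>q\<in>D. E q s \<longrightarrow> E q rr" using inR[OF s(1,2)] by blast
      obtain a b where ab: "a \<in> D" "b \<in> D" "ispair q a b" "(Ur a \<longrightarrow> b = swp c c' a) \<and> (\<not> Ur a \<longrightarrow> \<not> Ur b \<and>
     (\<forall>a'\<in>D. E a' a \<longrightarrow> (\<exists>b'\<in>D. E b' b \<and> inrel s a' b')) \<and>
     (\<forall>b'\<in>D. E b' b \<longrightarrow> (\<exists>a'\<in>D. E a' a \<and> inrel s a' b')))"
        using Bs q(1) s(3) unfolding bisim_def by blast
      have "(\<not> Ur a \<longrightarrow> \<not> Ur b \<and>
     (\<forall>a'\<in>D. E a' a \<longrightarrow> (\<exists>b'\<in>D. E b' b \<and> inrel rr a' b')) \<and>
     (\<forall>b'\<in>D. E b' b \<longrightarrow> (\<exists>a'\<in>D. E a' a \<and> inrel rr a' b')))"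
        using ab(4) inrel_mono[OF _ sub] by blast
      then show ?thesis using ab by blast
    next
      assume "E q sv"
      then have qq: "q = qv" using sv(3) q(1) by blast
      have "\<forall>a'\<in>D. E a' v \<longrightarrow> (\<exists>b'\<in>D. E b' W \<and> inrel rr a' b')"
      proof (intro ballI impI)
        fix a' assume a': "a' \<in> D" "E a' v"
        obtain w r where wr: "w \<in> D" "r \<in> D" "B r" "inrel r a' w" using IH a' by blast
        have "E w W" using W' wr a' by blast
        moreover have "inrel rr a' w" using rel_u[OF a' wr(1)] wr by blast
        ultimately show "\<exists>b'\<in>D. E b' W \<and> inrel rr a' b'" using wr(1) by blast
      qed
      moreover have "\<forall>b'\<in>D. E b' W \<longrightarrow> (\<exists>a'\<in>D. E a' v \<and> inrel rr a' b')"
      proof (intro ballI impI)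
        fix b' assume b': "b' \<in> D" "E b' W"
        then obtain u where u: "u \<in> D" "E u v" "\<exists>r\<in>D. B r \<and> inrel r u b'" using W' by blast
        then have "inrel rr u b'" using rel_u[OF u(1,2) b'(1)] by blast
        then show "\<exists>a'\<in>D. E a' v \<and> inrel rr a' b'" using u by blast
      qed
      ultimately show ?thesis using qq qv v(1,2) W(1,2) by blast
    qed
  qed
  moreover have "inrel rr v W"
  proof -
    have "E qv rr" using rr(3) sv(3) qv(1) by blast
    then show ?thesis unfolding inrel_def using qv by blast
  qed
  ultimately show ?thesis using W(1) rr(1) by blast
qed

lemma bisim_tot: assumes z: "z \<in> D" "haveTC z" shows "\<exists>w\<in>D. \<exists>r\<in>D. B r \<and> inrel r z w"
proof (rule ccontr)
  assume nz: "\<not> (\<exists>w\<in>D. \<exists>r\<in>D. B r \<and> inrel r z w)"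
  obtain t where t: "t \<in> D" "istr t" "E z t" using z unfolding haveTC_def by blast
  have nt: "\<not> Ur t" using t(2) unfolding is_transitive_def by blast
  define env where "env = (\<lambda>_::nat. c)(2 := c')"
  have rg: "range env \<subseteq> D" unfolding env_def using cD by auto
  have e12: "env 1 = c" "env 2 = c'" unfolding env_def by auto
  have F3e: "\<And>v. sat D E Ur (env(0 := v)) F3 \<longleftrightarrow> \<not> (\<exists>w\<in>D. \<exists>r\<in>D. B r \<and> inrel r v w)"
    using sat_F3 e12 by simp
  have "sat D E Ur (env(0 := z)) F3" using F3e nz by blast
  then obtain v where v: "v \<in> D" "E v t" "sat D E Ur (env(0:=v)) F3"
     "\<forall>y\<in>D. E y v \<longrightarrow> E y t \<longrightarrow> \<not> sat D E Ur (env(0:=y)) F3"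
    using min_elem[OF rg t(1) nt z(1) t(3)] by blast
  have nv: "\<not> (\<exists>w\<in>D. \<exists>r\<in>D. B r \<and> inrel r v w)" using F3e v(3) by blast
  show False
  proof (cases "Ur v")
    case True then show False using bisim_sing[OF v(1) True] swp_D[OF v(1)] nv by blast
  next
    case False
    have hv: "haveTC v" unfolding haveTC_def using t v by blast
    have "\<forall>y\<in>D. E y v \<longrightarrow> (\<exists>w\<in>D. \<exists>r\<in>D. B r \<and> inrel r y w)"
    proof (intro ballI impI)
      fix y assume y: "y \<in> D" "E y v"
      have "E y t" using transD[OF t(2) v(1) y(1) v(2) y(2)] .
      then have "\<not> sat D E Ur (env(0:=y)) F3" using v(4) y by blast
      then show "\<exists>w\<in>D. \<exists>r\<in>D. B r \<and> inrel r y w" using F3e by blast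
    qed
    then show False using bisim_step[OF v(1) False hv] nv by blast
  qed
qed

end

lemma range_upd: "range env \<subseteq> S \<Longrightarrow> d \<in> S \<Longrightarrow> range (env(i := d)) \<subseteq> S"
  by (auto simp: image_def)

locale MIS = MI + MS
begin

definition sig where "sig z = (THE w. w \<in> D \<and> (\<exists>r\<in>D. B r \<and> inrel r z w))"

lemma sig_eq: assumes "z \<in> D" "w \<in> D" "r \<in> D" "B r" "inrel r z w" shows "sig z = w"
  unfolding sig_def
proof (rule the_equality)
  show "w \<in> D \<and> (\<exists>r\<in>D. B r \<and> inrel r z w)" using assms by blast
  fix w' assume "w' \<in> D \<and> (\<exists>r\<in>D. B r \<and> inrel r z w')"
  then obtain r' where "w' \<in> D" "r' \<in> D" "B r'" "inrel r' z w'" by blast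
  then show "w' = w" using bisim_func[OF _ assms(3) _ assms(4) assms(1) _ assms(2) _ assms(5)] by blast
qed

lemma sig_ok: assumes "z \<in> D" "haveTC z" shows "sig z \<in> D" "\<exists>r\<in>D. B r \<and> inrel r z (sig z)"
proof -
  obtain w r where "w \<in> D" "r \<in> D" "B r" "inrel r z w" using bisim_tot[OF assms] by blast
  moreover then have "sig z = w" using sig_eq assms(1) by blast
  ultimately show "sig z \<in> D" "\<exists>r\<in>D. B r \<and> inrel r z (sig z)" by blast+
qed

lemma sig_at: assumes "z \<in> D" "haveTC z"
  shows "(Ur z \<longrightarrow> sig z = swp c c' z) \<and> (\<not> Ur z \<longrightarrow> \<not> Ur (sig z) \<and>
     (\<forall>a'\<in>D. E a' z \<longrightarrow> E (sig a') (sig z)) \<and>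
     (\<forall>b'\<in>D. E b' (sig z) \<longrightarrow> (\<exists>a'\<in>D. E a' z \<and> sig a' = b')))"
proof -
  obtain r where r: "r \<in> D" "B r" "inrel r z (sig z)" using sig_ok[OF assms] by blast
  have at: "(Ur z \<longrightarrow> sig z = swp c c' z) \<and> (\<not> Ur z \<longrightarrow> \<not> Ur (sig z) \<and>
     (\<forall>a'\<in>D. E a' z \<longrightarrow> (\<exists>b'\<in>D. E b' (sig z) \<and> inrel r a' b')) \<and>
     (\<forall>b'\<in>D. E b' (sig z) \<longrightarrow> (\<exists>a'\<in>D. E a' z \<and> inrel r a' b')))"
    using bisim_at[OF r(2) r(3) assms(1) sig_ok(1)[OF assms]] .
  have "\<forall>a'\<in>D. E a' z \<longrightarrow> E (sig a') (sig z)" if nz: "\<not> Ur z"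
  proof (intro ballI impI)
    fix a' assume a': "a' \<in> D" "E a' z"
    then obtain b' where b': "b' \<in> D" "E b' (sig z)" "inrel r a' b'" using at nz by blast
    have "sig a' = b'" using sig_eq[OF a'(1) b'(1) r(1,2) b'(3)] .
    then show "E (sig a') (sig z)" using b' by simp
  qed
  moreover have "\<forall>b'\<in>D. E b' (sig z) \<longrightarrow> (\<exists>a'\<in>D. E a' z \<and> sig a' = b')" if nz: "\<not> Ur z"
  proof (intro ballI impI)
    fix b' assume b': "b' \<in> D" "E b' (sig z)"
    then obtain a' where a': "a' \<in> D" "E a' z" "inrel r a' b'" using at nz by blast
    have "sig a' = b'" using sig_eq[OF a'(1) b'(1) r(1,2) a'(3)] .
    then show "\<exists>a'\<in>D. E a' z \<and> sig a' = b'" using a' by blast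
  qed
  ultimately show ?thesis using at by blast
qed

lemma sig_U: assumes z: "z \<in> UU" shows "sig z \<in> UU \<and> (\<forall>a. kerset (sig z) a \<longrightarrow> kerset z a \<or> a = c \<or> a = c')"
proof -
  have zD: "z \<in> D" "haveTC z" using U_D[OF z] U_haveTC[OF z] by blast+
  obtain t where t: "t \<in> D" "is_TC_singleton D E Ur z t" using TC_ex[OF zD] by blast
  have tr: "istr t" "E z t" using t(2) unfolding is_TC_singleton_def by blast+
  have nt: "\<not> Ur t" using tr(1) unfolding is_transitive_def by blast
  have hu: "haveTC u" if "u \<in> D" "E u t" for u unfolding haveTC_def using tr(1) t(1) that by blast
  define env where "env = (\<lambda>_::nat. c)(3 := c')"
  have rg: "range env \<subseteq> D" unfolding env_def using cD by auto
  have e23: "env 2 = c" "env 3 = c'" unfolding env_def by auto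
  have F4e: "\<And>u w. sat D E Ur (env(0 := u, 1 := w)) F4 \<longleftrightarrow> (\<exists>r\<in>D. B r \<and> inrel r u w)"
    using sat_F4 e23 by simp
  have F4s: "\<And>u w. u \<in> D \<Longrightarrow> haveTC u \<Longrightarrow> w \<in> D \<Longrightarrow> sat D E Ur (env(0 := u, 1 := w)) F4 \<longleftrightarrow> w = sig u"
  proof -
    fix u w assume u: "u \<in> D" "haveTC u" "w \<in> D"
    show "sat D E Ur (env(0 := u, 1 := w)) F4 \<longleftrightarrow> w = sig u"
    proof
      assume "sat D E Ur (env(0 := u, 1 := w)) F4"
      then obtain r where "r \<in> D" "B r" "inrel r u w" using F4e by blast
      then show "w = sig u" using sig_eq[OF u(1) u(3)] by metis
    next
      assume "w = sig u"
      then obtain r where "r \<in> D" "B r" "inrel r u w" using sig_ok(2)[OF u(1,2)] by blast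
      then show "sat D E Ur (env(0 := u, 1 := w)) F4" using F4e by blast
    qed
  qed
  have "\<forall>u\<in>D. E u t \<longrightarrow> (\<exists>w\<in>D. sat D E Ur (env(0 := u, 1 := w)) F4 \<and>
          (\<forall>w'\<in>D. sat D E Ur (env(0 := u, 1 := w')) F4 \<longrightarrow> w' = w))"
  proof (intro ballI impI)
    fix u assume u: "u \<in> D" "E u t"
    have h: "haveTC u" using hu[OF u] .
    have sD: "sig u \<in> D" using sig_ok(1)[OF u(1) h] .
    have "sat D E Ur (env(0 := u, 1 := sig u)) F4" using F4s[OF u(1) h sD] by simp
    moreover have "\<forall>w'\<in>D. sat D E Ur (env(0 := u, 1 := w')) F4 \<longrightarrow> w' = sig u"
      using F4s[OF u(1) h] by blast
    ultimately show "\<exists>w\<in>D. sat D E Ur (env(0 := u, 1 := w)) F4 \<and>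
          (\<forall>w'\<in>D. sat D E Ur (env(0 := u, 1 := w')) F4 \<longrightarrow> w' = w)" using sD by blast
  qed
  from repl[OF rg t(1) nt this] obtain T where T: "T \<in> D" "\<not> Ur T"
    "\<forall>w\<in>D. E w T \<longleftrightarrow> (\<exists>u\<in>D. E u t \<and> sat D E Ur (env(0 := u, 1 := w)) F4)" by blast
  have T': "\<forall>w\<in>D. E w T \<longleftrightarrow> (\<exists>u\<in>D. E u t \<and> w = sig u)"
  proof
    fix w assume w: "w \<in> D"
    have "E w T \<longleftrightarrow> (\<exists>u\<in>D. E u t \<and> sat D E Ur (env(0 := u, 1 := w)) F4)" using T(3) w by (rule bspec)
    also have "\<dots> \<longleftrightarrow> (\<exists>u\<in>D. E u t \<and> w = sig u)"
    proof
      assume "\<exists>u\<in>D. E u t \<and> sat D E Ur (env(0 := u, 1 := w)) F4"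
      then obtain u where u: "u \<in> D" "E u t" "sat D E Ur (env(0 := u, 1 := w)) F4" by blast
      then have "w = sig u" using F4s[OF u(1) hu[OF u(1,2)] w] by blast
      then show "\<exists>u\<in>D. E u t \<and> w = sig u" using u by blast
    next
      assume "\<exists>u\<in>D. E u t \<and> w = sig u"
      then obtain u where u: "u \<in> D" "E u t" "w = sig u" by blast
      then have "sat D E Ur (env(0 := u, 1 := w)) F4" using F4s[OF u(1) hu[OF u(1,2)] w] by blast
      then show "\<exists>u\<in>D. E u t \<and> sat D E Ur (env(0 := u, 1 := w)) F4" using u by blast
    qed
    finally show "E w T \<longleftrightarrow> (\<exists>u\<in>D. E u t \<and> w = sig u)" .
  qed
  have Tm: "\<And>w. w \<in> D \<Longrightarrow> E w T \<longleftrightarrow> (\<exists>u\<in>D. E u t \<and> w = sig u)" using T' by (rule bspec)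
  have "istr T" unfolding is_transitive_def
  proof (intro conjI ballI impI)
    show "\<not> Ur T" by fact
    fix y x assume h: "y \<in> D" "E y T" "\<not> Ur y" "x \<in> D" "E x y"
    then obtain u where u: "u \<in> D" "E u t" "y = sig u" using Tm[OF h(1)] by blast
    have at: "(Ur u \<longrightarrow> sig u = swp c c' u) \<and> (\<not> Ur u \<longrightarrow> \<not> Ur (sig u) \<and>
     (\<forall>a'\<in>D. E a' u \<longrightarrow> E (sig a') (sig u)) \<and>
     (\<forall>b'\<in>D. E b' (sig u) \<longrightarrow> (\<exists>a'\<in>D. E a' u \<and> sig a' = b')))" using sig_at[OF u(1) hu[OF u(1,2)]] .
    have "\<not> Ur u"
    proof
      assume "Ur u" then have "sig u = swp c c' u" using at by blast
      then have "Ur y" using u(3) swp_Ur[OF \<open>Ur u\<close>] by simp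
      then show False using h(3) by blast
    qed
    then have bk: "\<forall>b'\<in>D. E b' (sig u) \<longrightarrow> (\<exists>a'\<in>D. E a' u \<and> sig a' = b')" using at by blast
    have "E x (sig u)" using h(5) u(3) by simp
    then obtain a' where a': "a' \<in> D" "E a' u" "sig a' = x" using bk h(4) by blast
    have "E a' t" using transD[OF tr(1) u(1) a'(1) u(2) a'(2)] .
    then show "E x T" using Tm[OF h(4)] a' by blast
  qed
  moreover have "E (sig z) T" using Tm[OF sig_ok(1)[OF zD]] zD(1) tr(2) by blast
  ultimately have hs: "haveTC (sig z)" unfolding haveTC_def using T(1) by blast
  have kb: "\<forall>a. kerset (sig z) a \<longrightarrow> kerset z a \<or> a = c \<or> a = c'"
  proof (intro allI impI)
    fix a assume ka: "kerset (sig z) a"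
    then have a: "a \<in> D" "Ur a" using kersetD by blast+
    have "E a T" using ka \<open>istr T\<close> \<open>E (sig z) T\<close> T(1) unfolding kerset_def by blast
    then obtain u where u: "u \<in> D" "E u t" "a = sig u" using Tm[OF a(1)] by blast
    have at: "(Ur u \<longrightarrow> sig u = swp c c' u) \<and> (\<not> Ur u \<longrightarrow> \<not> Ur (sig u))"
      using sig_at[OF u(1) hu[OF u(1,2)]] by blast
    have uU: "Ur u"
    proof (rule ccontr)
      assume "\<not> Ur u" then have "\<not> Ur (sig u)" using at by blast
      then show False using a(2) u(3) by simp
    qed
    then have "kerset z u" using kerset_TC[OF t] u(1,2) by blast
    moreover have "a = swp c c' u" using at uU u(3) by simp
    ultimately show "kerset z a \<or> a = c \<or> a = c'" unfolding swp_def by auto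
  qed
  have "small (kerset (sig z))"
    using small_mono[OF small_un[OF U_small[OF z] small_un[OF small_sing[OF cD(1) cU(1)] small_sing[OF cD(2) cU(2)]]]] kb
    by blast
  then show ?thesis using U_intro[OF sig_ok(1)[OF zD] hs] kb by blast
qed

lemma sig_UU: "z \<in> UU \<Longrightarrow> sig z \<in> UU" using sig_U by blast

lemma sig_invol: assumes z: "z \<in> UU" shows "sig (sig z) = z"
proof -
  have zD: "z \<in> D" "haveTC z" using U_D[OF z] U_haveTC[OF z] by blast+
  have sU: "sig z \<in> UU" using sig_UU[OF z] .
  have sD: "sig z \<in> D" "haveTC (sig z)" using U_D[OF sU] U_haveTC[OF sU] by blast+
  obtain r1 where r1: "r1 \<in> D" "B r1" "inrel r1 z (sig z)" using sig_ok[OF zD] by blast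
  obtain r2 where r2: "r2 \<in> D" "B r2" "inrel r2 (sig z) (sig (sig z))" using sig_ok[OF sD] by blast
  show ?thesis using bisim_comp[OF r1(1) r2(1) r1(2) r2(2) zD(1) sD(1) sig_ok(1)[OF sD] r1(3) r2(3)] by simp
qed

lemma sig_E: assumes "z \<in> UU" "s \<in> UU" shows "E (sig s) (sig z) \<longleftrightarrow> E s z"
proof
  show "E s z \<Longrightarrow> E (sig s) (sig z)"
    using sig_at[OF U_D[OF assms(1)] U_haveTC[OF assms(1)]] U_D[OF assms(2)] nonUr_mem[OF U_D[OF assms(1)] U_D[OF assms(2)]]
    by blast
next
  assume h: "E (sig s) (sig z)"
  have u: "sig z \<in> UU" "sig s \<in> UU" using sig_UU assms by blast+
  have "E (sig (sig s)) (sig (sig z))"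
    using sig_at[OF U_D[OF u(1)] U_haveTC[OF u(1)]] U_D[OF u(2)] nonUr_mem[OF U_D[OF u(1)] U_D[OF u(2)] h] h
    by blast
  then show "E s z" using sig_invol assms by simp
qed

lemma sig_Ur: assumes "z \<in> UU" shows "Ur (sig z) \<longleftrightarrow> Ur z"
  using sig_at[OF U_D[OF assms] U_haveTC[OF assms]] swp_Ur by auto

lemma sig_inj: assumes "z \<in> UU" "s \<in> UU" shows "sig z = sig s \<longleftrightarrow> z = s"
  using sig_invol[OF assms(1)] sig_invol[OF assms(2)] by metis

lemma sig_c: "sig c = c'"
proof -
  have cu: "c \<in> UU" using U_Ur[OF cD(1) cU(1)] .
  show ?thesis using sig_at[OF U_D[OF cu] U_haveTC[OF cu]] cU(1) unfolding swp_def by simp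
qed

lemma sig_fix: assumes z: "z \<in> UU" and nk: "\<not> kerset z c" "\<not> kerset z c'" shows "sig z = z"
proof (rule ccontr)
  assume ne: "sig z \<noteq> z"
  have zD: "z \<in> D" "haveTC z" using U_D[OF z] U_haveTC[OF z] by blast+
  obtain t where t: "t \<in> D" "is_TC_singleton D E Ur z t" using TC_ex[OF zD] by blast
  have tr: "istr t" "E z t" using t(2) unfolding is_TC_singleton_def by blast+
  have nt: "\<not> Ur t" using tr(1) unfolding is_transitive_def by blast
  have hu: "haveTC u" if "u \<in> D" "E u t" for u unfolding haveTC_def using tr(1) t(1) that by blast
  define env where "env = (\<lambda>_::nat. c)(2 := c')"
  have rg: "range env \<subseteq> D" unfolding env_def using cD by auto
  have e12: "env 1 = c" "env 2 = c'" unfolding env_def by auto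
  have F7e: "\<And>v. sat D E Ur (env(0 := v)) F7 \<longleftrightarrow> (\<exists>w\<in>D. \<exists>r\<in>D. B r \<and> inrel r v w \<and> v \<noteq> w)"
    using sat_F7 e12 by simp
  have F7s: "\<And>v. v \<in> D \<Longrightarrow> E v t \<Longrightarrow> sat D E Ur (env(0 := v)) F7 \<longleftrightarrow> sig v \<noteq> v"
  proof -
    fix v assume v: "v \<in> D" "E v t"
    have h: "haveTC v" using hu[OF v] .
    show "sat D E Ur (env(0 := v)) F7 \<longleftrightarrow> sig v \<noteq> v"
    proof
      assume "sat D E Ur (env(0 := v)) F7"
      then obtain w r where wr: "w \<in> D" "r \<in> D" "B r" "inrel r v w" "v \<noteq> w" using F7e by blast
      then have "sig v = w" using sig_eq[OF v(1)] by blast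
      then show "sig v \<noteq> v" using wr(5) by simp
    next
      assume ne: "sig v \<noteq> v"
      obtain r where "r \<in> D" "B r" "inrel r v (sig v)" using sig_ok(2)[OF v(1) h] by blast
      then show "sat D E Ur (env(0 := v)) F7" using F7e sig_ok(1)[OF v(1) h] ne by metis
    qed
  qed
  have "sat D E Ur (env(0 := z)) F7" using F7s[OF zD(1) tr(2)] ne by simp
  then obtain v where v: "v \<in> D" "E v t" "sat D E Ur (env(0:=v)) F7"
     "\<forall>y\<in>D. E y v \<longrightarrow> E y t \<longrightarrow> \<not> sat D E Ur (env(0:=y)) F7"
    using min_elem[OF rg t(1) nt zD(1) tr(2)] by blast
  have nv: "sig v \<noteq> v" using F7s[OF v(1,2)] v(3) by blast
  have mn: "\<And>y. y \<in> D \<Longrightarrow> E y v \<Longrightarrow> sig y = y"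
  proof -
    fix y assume y: "y \<in> D" "E y v"
    have yt: "E y t" using transD[OF tr(1) v(1) y(1) v(2) y(2)] .
    then have "\<not> sat D E Ur (env(0:=y)) F7" using v(4) y by blast
    then show "sig y = y" using F7s[OF y(1) yt] by blast
  qed
  have at: "(Ur v \<longrightarrow> sig v = swp c c' v) \<and> (\<not> Ur v \<longrightarrow> \<not> Ur (sig v) \<and>
     (\<forall>a'\<in>D. E a' v \<longrightarrow> E (sig a') (sig v)) \<and>
     (\<forall>b'\<in>D. E b' (sig v) \<longrightarrow> (\<exists>a'\<in>D. E a' v \<and> sig a' = b')))" using sig_at[OF v(1) hu[OF v(1,2)]] .
  show False
  proof (cases "Ur v")
    case True
    then have "kerset z v" using kerset_TC[OF t] v(1,2) by blast
    then have "v \<noteq> c" "v \<noteq> c'" using nk by blast+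
    then show False using at True nv unfolding swp_def by simp
  next
    case False
    have "sig v = v"
    proof (rule ext[OF sig_ok(1)[OF v(1) hu[OF v(1,2)]] v(1)])
      show "\<not> Ur (sig v)" "\<not> Ur v" using at False by blast+
      fix y assume y: "y \<in> D"
      show "E y (sig v) \<longleftrightarrow> E y v"
      proof
        assume "E y (sig v)"
        then obtain a' where "a' \<in> D" "E a' v" "sig a' = y" using at False y by blast
        then show "E y v" using mn by metis
      next
        assume "E y v"
        then have "E (sig y) (sig v)" using at False y by blast
        then show "E y (sig v)" using mn[OF y \<open>E y v\<close>] by simp
      qed
    qed
    then show False using nv by blast
  qed
qed

lemma TC_in_U: assumes w: "w \<in> UU" and t: "t \<in> D" "is_TC_singleton D E Ur w t"
  shows "t \<in> UU"
proof -
  have tr: "istr t" "E w t" using t(2) unfolding is_TC_singleton_def by blast+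
  have nt: "\<not> Ur t" using tr(1) unfolding is_transitive_def by blast
  have el: "b \<in> UU \<and> (\<forall>a. kerset b a \<longrightarrow> kerset w a)" if b: "b \<in> D" "E b t" for b
  proof -
    have hb: "haveTC b" unfolding haveTC_def using tr(1) t(1) b by blast
    have kb: "\<forall>a. kerset b a \<longrightarrow> kerset w a"
    proof (intro allI impI)
      fix a assume ka: "kerset b a"
      then have "E a t" using tr(1) t(1) b unfolding kerset_def by blast
      then show "kerset w a" using kerset_TC[OF t] ka kersetD by blast
    qed
    have "small (kerset b)" using small_mono[OF U_small[OF w]] kb by blast
    then show ?thesis using U_intro[OF b(1) hb] kb by blast
  qed
  show ?thesis using KB[OF t(1) nt _ U_small[OF w]] el by blast
qed

lemma sig_ker: assumes z: "z \<in> UU" and ka: "kerset z a" shows "kerset (sig z) (sig a)"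
proof -
  have a: "a \<in> D" "Ur a" using kersetD[OF ka] by blast+
  have aU: "a \<in> UU" using U_Ur[OF a] .
  define w where "w = sig z"
  have wU: "w \<in> UU" unfolding w_def using sig_UU[OF z] .
  obtain t0 where t0: "t0 \<in> D" "is_TC_singleton D E Ur w t0" using TC_ex[OF U_D[OF wU] U_haveTC[OF wU]] by blast
  have tr0: "istr t0" "E w t0" using t0(2) unfolding is_TC_singleton_def by blast+
  have t0U: "t0 \<in> UU" using TC_in_U[OF wU t0] .
  define t1 where "t1 = sig t0"
  have t1U: "t1 \<in> UU" unfolding t1_def using sig_UU[OF t0U] .
  have st1: "sig t1 = t0" unfolding t1_def using sig_invol[OF t0U] .
  have "istr t1" unfolding is_transitive_def
  proof (intro conjI ballI impI)
    show "\<not> Ur t1" unfolding t1_def using sig_Ur[OF t0U] tr0(1) unfolding is_transitive_def by blast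
    fix y x assume h: "y \<in> D" "E y t1" "\<not> Ur y" "x \<in> D" "E x y"
    have yU: "y \<in> UU" using U_trans[OF t1U h(1,2)] .
    have xU: "x \<in> UU" using U_trans[OF yU h(4,5)] .
    have "E (sig y) t0" using sig_E[OF t1U yU] h(2) st1 by simp
    moreover have "E (sig x) (sig y)" using sig_E[OF yU xU] h(5) by simp
    ultimately have "E (sig x) t0" using transD[OF tr0(1) U_D[OF sig_UU[OF yU]] U_D[OF sig_UU[OF xU]]] by blast
    then have "E (sig (sig x)) (sig t0)" using sig_E[OF t0U sig_UU[OF xU]] by simp
    then show "E x t1" using sig_invol[OF xU] unfolding t1_def by simp
  qed
  moreover have "E z t1"
  proof -
    have "E (sig w) (sig t0)" using sig_E[OF t0U wU] tr0(2) by simp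
    then show ?thesis unfolding t1_def w_def using sig_invol[OF z] by simp
  qed
  ultimately have "E a t1" using ka U_D[OF t1U] unfolding kerset_def by blast
  then have "E (sig a) t0" using sig_E[OF t1U aU] st1 by simp
  moreover have "sig a \<in> D" "Ur (sig a)" using U_D[OF sig_UU[OF aU]] sig_Ur[OF aU] a(2) by blast+
  ultimately have "kerset w (sig a)" using kerset_TC[OF t0] by blast
  then show ?thesis unfolding w_def .
qed

lemma sat_sig: "range env \<subseteq> UU \<Longrightarrow> sat UU E Ur (sig \<circ> env) q \<longleftrightarrow> sat UU E Ur env q"
proof (induction q arbitrary: env)
  case (Mem i j)
  have "env i \<in> UU" "env j \<in> UU" using Mem.prems by (auto simp del: fun_upd_apply)
  then show ?case using sig_E by simp
next
  case (Equ i j)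
  have "env i \<in> UU" "env j \<in> UU" using Equ.prems by (auto simp del: fun_upd_apply)
  then show ?case using sig_inj by simp
next
  case (Urel i)
  have "env i \<in> UU" using Urel.prems by (auto simp del: fun_upd_apply)
  then show ?case using sig_Ur by simp
next
  case (Neg q)
  then show ?case by simp
next
  case (Conj q1 q2)
  then show ?case by simp
next
  case (Ex i q)
  show ?case
  proof
    assume "sat UU E Ur (sig \<circ> env) (Ex i q)"
    then obtain d where d: "d \<in> UU" "sat UU E Ur ((sig \<circ> env)(i := d)) q" unfolding sat.simps by blast
    have eq: "(sig \<circ> env)(i := d) = sig \<circ> (env(i := sig d))" using sig_invol[OF d(1)] by (auto simp: fun_eq_iff)
    have rg: "range (env(i := sig d)) \<subseteq> UU" using range_upd[OF Ex.prems sig_UU[OF d(1)]] .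
    have "sat UU E Ur (sig \<circ> (env(i := sig d))) q" using d(2) eq by (simp only:)
    then have "sat UU E Ur (env(i := sig d)) q" using Ex.IH[OF rg] by blast
    then show "sat UU E Ur env (Ex i q)" unfolding sat.simps using sig_UU[OF d(1)] by blast
  next
    assume "sat UU E Ur env (Ex i q)"
    then obtain d where d: "d \<in> UU" "sat UU E Ur (env(i := d)) q" unfolding sat.simps by blast
    have rg: "range (env(i := d)) \<subseteq> UU" using range_upd[OF Ex.prems d(1)] .
    have "sat UU E Ur (sig \<circ> (env(i := d))) q" using Ex.IH[OF rg] d(2) by blast
    moreover have "sig \<circ> (env(i := d)) = (sig \<circ> env)(i := sig d)" by (auto simp: fun_eq_iff)
    ultimately have "sat UU E Ur ((sig \<circ> env)(i := sig d)) q" by (simp only:)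
    then show "sat UU E Ur (sig \<circ> env) (Ex i q)" unfolding sat.simps using sig_UU[OF d(1)] by blast
  qed
qed

end

fun fv :: "fm \<Rightarrow> nat set" where
  "fv (Mem i j) = {i, j}"
| "fv (Equ i j) = {i, j}"
| "fv (Urel i) = {i}"
| "fv (Neg q) = fv q"
| "fv (Conj q r) = fv q \<union> fv r"
| "fv (Ex i q) = fv q - {i}"

lemma fv_finite: "finite (fv q)" by (induction q) auto

lemma sat_cong: "(\<forall>i\<in>fv q. e i = e' i) \<Longrightarrow> sat S E Ur e q = sat S E Ur e' q"
proof (induction q arbitrary: e e')
  case (Ex i q)
  have "\<And>d. \<forall>j\<in>fv q. (e(i := d)) j = (e'(i := d)) j" using Ex.prems by auto
  then show ?case using Ex.IH by (simp only: sat.simps) blast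
next
  case (Conj q r)
  have "sat S E Ur e q = sat S E Ur e' q" using Conj.IH(1) Conj.prems by simp
  moreover have "sat S E Ur e r = sat S E Ur e' r" using Conj.IH(2) Conj.prems by simp
  ultimately show ?case by simp
qed auto

context MI begin

lemma small_fin: "finite F \<Longrightarrow> small (\<lambda>a. \<exists>i\<in>F. kerset (env i) a) \<or> \<not> (\<forall>i\<in>F. env i \<in> UU)"
proof (induction F rule: finite_induct)
  case empty then show ?case using small_mono[OF small_empty] by auto
next
  case (insert j F)
  show ?case
  proof (cases "\<forall>i\<in>insert j F. env i \<in> UU")
    case True
    then have "small (\<lambda>a. \<exists>i\<in>F. kerset (env i) a)" using insert by blast
    moreover have "small (kerset (env j))" using U_small True by blast
    ultimately have "small (\<lambda>a. kerset (env j) a \<or> (\<exists>i\<in>F. kerset (env i) a))" using small_un by blast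
    then show ?thesis using small_mono by fastforce
  qed blast
qed

lemma MIS_inst: "a \<in> D \<Longrightarrow> b \<in> D \<Longrightarrow> Ur a \<Longrightarrow> Ur b \<Longrightarrow> MIS D E Ur \<psi> p a b"
  unfolding MIS_def MS_def MS_axioms_def using MI_axioms M_axioms by (auto simp: MI_def)

lemma U_replacement: "ax_replacement UU E Ur"
  unfolding ax_replacement_def
proof (intro allI impI ballI)
  fix \<phi> :: fm and env :: "nat \<Rightarrow> 'a" and x
  assume env: "range env \<subseteq> UU" and x: "x \<in> UU" "\<not> Ur x"
    and H: "\<forall>u\<in>UU. E u x \<longrightarrow>
               (\<exists>v\<in>UU. sat UU E Ur (env(0 := u, 1 := v)) \<phi>
                  \<and> (\<forall>v'\<in>UU. sat UU E Ur (env(0 := u, 1 := v')) \<phi> \<longrightarrow> v' = v))"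
  define e where "e = (\<lambda>n. if n mod 3 = 0 then env (n div 3) else if n mod 3 = 1 then p (n div 3) else p 0)"
  have h3: "Suc (3*i) div 3 = i" "Suc (3*i) mod 3 = 1" for i :: nat by presburger+
  have gd: "good e" unfolding good_def e_def using h3 by simp
  have envD: "env i \<in> D" for i using env U_D by blast
  have rD: "range e \<subseteq> D" unfolding e_def using envD prange by auto
  have xD: "x \<in> D" using U_D[OF x(1)] .
  define \<theta> where "\<theta> = Ex 3 (Conj (Equ 3 1) (Conj (InU \<psi> 3) (rel \<psi> \<phi>)))"
  have key: "sat D E Ur (e(0 := u, 1 := v)) \<theta> \<longleftrightarrow> v \<in> UU \<and> sat UU E Ur (env(0 := u, 1 := v)) \<phi>"
    if u: "u \<in> UU" and v: "v \<in> D" for u v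
  proof -
    define e2 where "e2 = e(0 := u, 1 := v, 3 := v)"
    have "sat D E Ur (e(0 := u, 1 := v)) \<theta> \<longleftrightarrow> sat D E Ur e2 (InU \<psi> 3) \<and> sat D E Ur e2 (rel \<psi> \<phi>)"
      unfolding \<theta>_def e2_def using v by auto
    moreover have g2: "good e2" unfolding e2_def using good_upd[OF good_upd[OF good_upd[OF gd]]] by simp
    moreover have "sat D E Ur e2 (InU \<psi> 3) \<longleftrightarrow> v \<in> UU" using sat_InU[OF g2, of 3] v unfolding e2_def by simp
    moreover have "v \<in> UU \<Longrightarrow> sat D E Ur e2 (rel \<psi> \<phi>) \<longleftrightarrow> sat UU E Ur (env(0 := u, 1 := v)) \<phi>"
    proof -
      assume vU: "v \<in> UU"
      have fe: "(\<lambda>i. e2 (3*i)) = env(0 := u, 1 := v)" unfolding e2_def e_def by (auto simp: fun_eq_iff)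
      have "\<forall>i. e2 (3*i) \<in> UU"
      proof
        fix i
        have rg: "range (env(0 := u, 1 := v)) \<subseteq> UU" using range_upd[OF range_upd[OF env u] vU] .
        have "(env(0 := u, 1 := v)) i \<in> UU" using rg by (metis rangeI subsetD)
        then show "e2 (3*i) \<in> UU" using fun_cong[OF fe, of i] by (simp only:)
      qed
      then show ?thesis using sat_rel[OF g2] fe by metis
    qed
    ultimately show ?thesis by blast
  qed
  have "\<forall>u\<in>D. E u x \<longrightarrow> (\<exists>v\<in>D. sat D E Ur (e(0 := u, 1 := v)) \<theta> \<and>
          (\<forall>v'\<in>D. sat D E Ur (e(0 := u, 1 := v')) \<theta> \<longrightarrow> v' = v))"
  proof (intro ballI impI)
    fix u assume u: "u \<in> D" "E u x"
    have uU: "u \<in> UU" using U_trans[OF x(1) u] .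
    obtain v where v: "v \<in> UU" "sat UU E Ur (env(0 := u, 1 := v)) \<phi>"
      "\<forall>v'\<in>UU. sat UU E Ur (env(0 := u, 1 := v')) \<phi> \<longrightarrow> v' = v" using H uU u(2) by blast
    have "sat D E Ur (e(0 := u, 1 := v)) \<theta>" using key[OF uU U_D[OF v(1)]] v by blast
    moreover have "\<forall>v'\<in>D. sat D E Ur (e(0 := u, 1 := v')) \<theta> \<longrightarrow> v' = v"
      using key[OF uU] v(3) by blast
    ultimately show "\<exists>v\<in>D. sat D E Ur (e(0 := u, 1 := v)) \<theta> \<and>
          (\<forall>v'\<in>D. sat D E Ur (e(0 := u, 1 := v')) \<theta> \<longrightarrow> v' = v)" using U_D[OF v(1)] by blast
  qed
  from repl[OF rD xD x(2) this] obtain y where y: "y \<in> D" "\<not> Ur y"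
    "\<forall>v\<in>D. E v y \<longleftrightarrow> (\<exists>u\<in>D. E u x \<and> sat D E Ur (e(0 := u, 1 := v)) \<theta>)" by blast
  have ych: "E v y \<longleftrightarrow> (\<exists>u\<in>UU. E u x \<and> v \<in> UU \<and> sat UU E Ur (env(0 := u, 1 := v)) \<phi>)" if v: "v \<in> D" for v
  proof -
    have "E v y \<longleftrightarrow> (\<exists>u\<in>D. E u x \<and> sat D E Ur (e(0 := u, 1 := v)) \<theta>)" using y(3) v by (rule bspec)
    also have "\<dots> \<longleftrightarrow> (\<exists>u\<in>UU. E u x \<and> v \<in> UU \<and> sat UU E Ur (env(0 := u, 1 := v)) \<phi>)"
    proof
      assume "\<exists>u\<in>D. E u x \<and> sat D E Ur (e(0 := u, 1 := v)) \<theta>"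
      then obtain u where u: "u \<in> D" "E u x" "sat D E Ur (e(0 := u, 1 := v)) \<theta>" by blast
      have uU: "u \<in> UU" using U_trans[OF x(1) u(1,2)] .
      then show "\<exists>u\<in>UU. E u x \<and> v \<in> UU \<and> sat UU E Ur (env(0 := u, 1 := v)) \<phi>" using key[OF uU v] u by blast
    next
      assume "\<exists>u\<in>UU. E u x \<and> v \<in> UU \<and> sat UU E Ur (env(0 := u, 1 := v)) \<phi>"
      then obtain u where u: "u \<in> UU" "E u x" "v \<in> UU" "sat UU E Ur (env(0 := u, 1 := v)) \<phi>" by blast
      then show "\<exists>u\<in>D. E u x \<and> sat D E Ur (e(0 := u, 1 := v)) \<theta>" using key[OF u(1) v] U_D[OF u(1)] by blast
    qed
    finally show ?thesis .
  qed
  define F where "F = fv \<phi> - {0, 1}"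
  have finF: "finite F" unfolding F_def using fv_finite by blast
  define P where "P = (\<lambda>a. kerset x a \<or> (\<exists>i\<in>F. kerset (env i) a))"
  have envU: "\<forall>i\<in>F. env i \<in> UU" using env by blast
  have sP: "small P" unfolding P_def using small_un[OF U_small[OF x(1)]] small_fin[OF finF, of env] envU by blast
  have "y \<in> UU"
  proof (rule KB[OF y(1,2) _ sP])
    show "\<forall>v\<in>D. E v y \<longrightarrow> v \<in> UU \<and> (\<forall>a. kerset v a \<longrightarrow> P a)"
    proof (intro ballI impI conjI allI)
      fix v assume v: "v \<in> D" "E v y"
      then obtain u where u: "u \<in> UU" "E u x" "v \<in> UU" "sat UU E Ur (env(0 := u, 1 := v)) \<phi>" using ych by blast
      show "v \<in> UU" by fact
      fix a assume ka: "kerset v a"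
      show "P a"
      proof (rule ccontr)
        assume nPa: "\<not> P a"
        have a: "a \<in> D" "Ur a" using kersetD[OF ka] by blast+
        have "small (\<lambda>b. P b \<or> kerset v b)" using small_un[OF sP U_small[OF u(3)]] .
        then obtain c' where c': "c' \<in> D" "Ur c'" "\<not> (P c' \<or> kerset v c')" using small_notall by blast
        interpret S: MIS D E Ur \<psi> p a c' using MIS_inst[OF a(1) c'(1) a(2) c'(2)] .
        have uD: "u \<in> D" using U_D[OF u(1)] .
        have xk: "\<And>b. kerset u b \<Longrightarrow> kerset x b" using kerset_mem[OF xD uD u(2)] .
        have nPc: "\<not> P c'" using c'(3) by blast
        have su: "S.sig u = u"
        proof (rule S.sig_fix[OF u(1)])
          show "\<not> kerset u a" using xk nPa unfolding P_def by blast
          show "\<not> kerset u c'" using xk nPc unfolding P_def by blast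
        qed
        have se: "S.sig (env i) = env i" if iF: "i \<in> F" for i
        proof (rule S.sig_fix)
          show "env i \<in> UU" using env by (metis rangeI subsetD)
          show "\<not> kerset (env i) a" using iF nPa unfolding P_def by blast
          show "\<not> kerset (env i) c'" using iF nPc unfolding P_def by blast
        qed
        have sv: "S.sig v \<in> UU" using S.sig_UU[OF u(3)] .
        have rg: "range (env(0 := u, 1 := v)) \<subseteq> UU" using range_upd[OF range_upd[OF env u(1)] u(3)] .
        have "sat UU E Ur (S.sig \<circ> (env(0 := u, 1 := v))) \<phi>" using S.sat_sig[OF rg] u(4) by blast
        moreover have "\<forall>i\<in>fv \<phi>. (S.sig \<circ> (env(0 := u, 1 := v))) i = (env(0 := u, 1 := S.sig v)) i"
        proof
          fix i assume i: "i \<in> fv \<phi>"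
          show "(S.sig \<circ> (env(0 := u, 1 := v))) i = (env(0 := u, 1 := S.sig v)) i"
          proof (cases "i = 0")
            case True then show ?thesis using su by simp
          next
            case False
            show ?thesis
            proof (cases "i = 1")
              case True then show ?thesis by simp
            next
              case False2: False
              then have "i \<in> F" unfolding F_def using i False by blast
              then show ?thesis using se False False2 by simp
            qed
          qed
        qed
        ultimately have "sat UU E Ur (env(0 := u, 1 := S.sig v)) \<phi>" using sat_cong by blast
        moreover obtain v0 where v0: "v0 \<in> UU" "\<forall>v'\<in>UU. sat UU E Ur (env(0 := u, 1 := v')) \<phi> \<longrightarrow> v' = v0"
          using H u(1,2) by blast
        ultimately have "S.sig v = v0" using sv by blast
        moreover have "v = v0" using v0(2) u(3,4) by blast
        ultimately have "S.sig v = v" by simp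
        moreover have "kerset (S.sig v) (S.sig a)" using S.sig_ker[OF u(3) ka] .
        ultimately have "kerset v c'" using S.sig_c by simp
        then show False using c'(3) by blast
      qed
    qed
  qed
  moreover have "\<forall>v\<in>UU. E v y \<longleftrightarrow> (\<exists>u\<in>UU. E u x \<and> sat UU E Ur (env(0 := u, 1 := v)) \<phi>)"
  proof
    fix v assume v: "v \<in> UU"
    show "E v y \<longleftrightarrow> (\<exists>u\<in>UU. E u x \<and> sat UU E Ur (env(0 := u, 1 := v)) \<phi>)"
      using ych[OF U_D[OF v]] v by blast
  qed
  ultimately show "\<exists>y\<in>UU. \<not> Ur y \<and> (\<forall>v\<in>UU. E v y \<longleftrightarrow> (\<exists>u\<in>UU. E u x \<and> sat UU E Ur (env(0 := u, 1 := v)) \<phi>))"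
    using y(2) by blast
qed

lemma U_ZFCU: "ZFCU_R UU E Ur"
  unfolding ZFCU_R_def using U_nonempty U_urel U_ext U_found U_pairing U_union U_powerset U_infinity
    U_separation U_replacement U_choice by blast

end

theorem mainTheorem10:
  fixes D :: "'a set" and E :: "'a \<Rightarrow> 'a \<Rightarrow> bool" and Ur :: "'a \<Rightarrow> bool"
    and \<psi> :: fm and p :: "nat \<Rightarrow> 'a"
  assumes "ZFCU_R D E Ur"
    and "range p \<subseteq> D"
    and "is_A_ideal D E Ur (\<lambda>k. sat D E Ur (p(0 := k)) \<psi>)"
  shows "ZFCU_R (U_I D E Ur (\<lambda>k. sat D E Ur (p(0 := k)) \<psi>)) E Ur
       \<and> A_proper_class (U_I D E Ur (\<lambda>k. sat D E Ur (p(0 := k)) \<psi>)) E Ur"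
proof -
  interpret MI D E Ur \<psi> p using assms unfolding MI_def MI_axioms_def M_def by blast
  show ?thesis using U_ZFCU U_proper by blast
qed

end
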